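(* Let $T\in\mathcal B(\mathcal H)$ and $a,c\in(0,\infty)$. Suppose $E\in\mathcal B(\mathcal H)$ is an idempotent such that $\|TE\|\le a$ and $c\|\xi\|\le\|T(I-E)\xi\|$ for every $\xi\in(I-E)\mathcal H$. Let $F=I-\mathcal R(T(I-E))$. Then (1) $\|T^*F\|\le a$; (2) $c\|\beta\|\le\|T^*(I-F)\beta\|$ for every $\beta\in(I-F)\mathcal H$. Moreover, if $E$ is the spectral projection of $|T|$ associated with $[0,c]$, then $F$ is the spectral projection of $|T^*|$ associated with $[0,c]$, and $I-E=\mathcal R(T^*(I-F))$.
   Context: For $S\in\mathcal B(\mathcal H)$, $\mathcal R(S)$ denotes the orthogonal projection onto the closure of the range of $S$. *)

theory Defs
  imports "HOL-Analysis.Analysis"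
begin

class scaleC = scaleR +
  fixes scaleC :: "complex \<Rightarrow> 'a \<Rightarrow> 'a" (infixr "*\<^sub>C" 75)
  assumes scaleR_scaleC: "scaleR r = scaleC (complex_of_real r)"

class complex_vector = scaleC + real_vector +
  assumes scaleC_add_right: "a *\<^sub>C (x + y) = a *\<^sub>C x + a *\<^sub>C y"
    and scaleC_add_left: "(a + b) *\<^sub>C x = a *\<^sub>C x + b *\<^sub>C x"
    and scaleC_scaleC: "a *\<^sub>C b *\<^sub>C x = (a * b) *\<^sub>C x"
    and scaleC_one: "1 *\<^sub>C x = x"

class complex_normed_vector = complex_vector + real_normed_vector +
  assumes norm_scaleC: "norm (a *\<^sub>C x) = cmod a * norm x"

text \<open>Inner product: conjugate-linear in the first, linear in the second argument.\<close>
class complex_inner = complex_normed_vector +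
  fixes cinner :: "'a \<Rightarrow> 'a \<Rightarrow> complex"
  assumes cinner_commute: "cinner x y = cnj (cinner y x)"
    and cinner_add_left: "cinner (x + y) z = cinner x z + cinner y z"
    and cinner_scaleC_left: "cinner (r *\<^sub>C x) y = cnj r * cinner x y"
    and cinner_real_nonneg: "Im (cinner x x) = 0 \<and> 0 \<le> Re (cinner x x)"
    and cinner_eq_zero_iff: "cinner x x = 0 \<longleftrightarrow> x = 0"
    and norm_eq_sqrt_cinner: "norm x = sqrt (Re (cinner x x))"

class chilbert_space = complex_inner + complete_space

definition bounded_clinear :: "('a::complex_normed_vector \<Rightarrow> 'b::complex_normed_vector) \<Rightarrow> bool" where
  "bounded_clinear T \<longleftrightarrow> bounded_linear T \<and> (\<forall>a x. T (a *\<^sub>C x) = a *\<^sub>C T x)"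

definition idOp :: "'a \<Rightarrow> 'a" where "idOp = (\<lambda>x. x)"

definition adj :: "('a::complex_inner \<Rightarrow> 'a) \<Rightarrow> ('a \<Rightarrow> 'a)" where
  "adj T = (THE S. \<forall>x y. cinner (S x) y = cinner x (T y))"

definition positive_op :: "('a::complex_inner \<Rightarrow> 'a) \<Rightarrow> bool" where
  "positive_op A \<longleftrightarrow> bounded_clinear A \<and>
     (\<forall>x. Im (cinner x (A x)) = 0 \<and> 0 \<le> Re (cinner x (A x)))"

definition op_abs :: "('a::complex_inner \<Rightarrow> 'a) \<Rightarrow> ('a \<Rightarrow> 'a)" where
  "op_abs T = (THE S. positive_op S \<and> S \<circ> S = adj T \<circ> T)"

definition orth_proj :: "'a::complex_inner set \<Rightarrow> ('a \<Rightarrow> 'a)" where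
  "orth_proj M = (\<lambda>x. THE y. y \<in> M \<and> (\<forall>m\<in>M. cinner m (x - y) = 0))"

definition range_proj :: "('a::complex_inner \<Rightarrow> 'a) \<Rightarrow> ('a \<Rightarrow> 'a)" where
  "range_proj S = orth_proj (closure (range S))"

definition pos_part :: "('a::complex_inner \<Rightarrow> 'a) \<Rightarrow> ('a \<Rightarrow> 'a)" where
  "pos_part B = (\<lambda>x. (1/2::real) *\<^sub>R (op_abs B x + B x))"

text \<open>Spectral projection of a self-adjoint A associated with (-\<infinity>, c]
  (Riesz's construction of the spectral family: projection onto ker (A - cI)^+).
  For a positive A (e.g. A = |T|) this is the spectral projection associated with [0, c].\<close>
definition spectral_proj_le :: "('a::complex_inner \<Rightarrow> 'a) \<Rightarrow> real \<Rightarrow> ('a \<Rightarrow> 'a)" where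
  "spectral_proj_le A c = orth_proj {x. pos_part (\<lambda>y. A y - c *\<^sub>R y) x = 0}"

end

theory Submission
  imports Defs
begin
lemma scaleC_zero_right[simp]: "a *\<^sub>C (0::'a::complex_vector) = 0"
proof -
  have "a *\<^sub>C 0 + a *\<^sub>C 0 = a *\<^sub>C (0::'a) + 0" by (simp flip: scaleC_add_right)
  then show ?thesis by (simp only: add_left_cancel)
qed
lemma scaleC_zero_left[simp]: "0 *\<^sub>C (x::'a::complex_vector) = 0"
proof -
  have "0 *\<^sub>C x + 0 *\<^sub>C x = 0 *\<^sub>C x + 0" by (simp flip: scaleC_add_left)
  then show ?thesis by (simp only: add_left_cancel)
qed
lemma scaleC_minus_right: "a *\<^sub>C (- x) = - (a *\<^sub>C (x::'a::complex_vector))"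
proof -
  have "a *\<^sub>C (- x) + a *\<^sub>C x = 0" by (simp flip: scaleC_add_right)
  then show ?thesis by (rule eq_neg_iff_add_eq_0[THEN iffD2])
qed
lemma scaleC_diff_right: "a *\<^sub>C (x - y) = a *\<^sub>C x - a *\<^sub>C (y::'a::complex_vector)"
  using scaleC_add_right[of a x "-y"] by (simp add: scaleC_minus_right)
lemma scaleC_minus_left: "(- a) *\<^sub>C x = - (a *\<^sub>C (x::'a::complex_vector))"
proof -
  have "(- a) *\<^sub>C x + a *\<^sub>C x = 0" by (simp flip: scaleC_add_left)
  then show ?thesis by (rule eq_neg_iff_add_eq_0[THEN iffD2])
qed
lemma scaleC_diff_left: "(a - b) *\<^sub>C x = a *\<^sub>C x - b *\<^sub>C (x::'a::complex_vector)"
  using scaleC_add_left[of a "-b" x] by (simp add: scaleC_minus_left)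
lemma scaleC_of_real: "complex_of_real r *\<^sub>C (x::'a::complex_vector) = r *\<^sub>R x"
  by (simp add: scaleR_scaleC)

lemma cinner_add_right: "cinner x (y + z) = cinner x y + cinner (x::'a::complex_inner) z"
  by (subst (1 2 3) cinner_commute) (simp add: cinner_add_left)
lemma cinner_scaleC_right: "cinner x (r *\<^sub>C y) = r * cinner (x::'a::complex_inner) y"
  by (subst (1 2) cinner_commute) (simp add: cinner_scaleC_left)
lemma cinner_zero_left[simp]: "cinner 0 (y::'a::complex_inner) = 0"
  using cinner_add_left[of 0 0 y] by simp
lemma cinner_zero_right[simp]: "cinner (y::'a::complex_inner) 0 = 0"
  using cinner_add_right[of y 0 0] by simp
lemma cinner_minus_left: "cinner (- x) y = - cinner x (y::'a::complex_inner)"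
  using cinner_add_left[of "-x" x y] by (simp add: eq_neg_iff_add_eq_0)
lemma cinner_minus_right: "cinner y (- x) = - cinner y (x::'a::complex_inner)"
  using cinner_add_right[of y "-x" x] by (simp add: eq_neg_iff_add_eq_0)
lemma cinner_diff_left: "cinner (x - y) z = cinner x z - cinner y (z::'a::complex_inner)"
  using cinner_add_left[of x "-y" z] by (simp add: cinner_minus_left)
lemma cinner_diff_right: "cinner z (x - y) = cinner z x - cinner z (y::'a::complex_inner)"
  using cinner_add_right[of z x "-y"] by (simp add: cinner_minus_right)
lemma cinner_scaleR_left: "cinner (r *\<^sub>R x) y = r * cinner x (y::'a::complex_inner)"
  by (simp add: scaleR_scaleC cinner_scaleC_left)
lemma cinner_scaleR_right: "cinner x (r *\<^sub>R y) = r * cinner x (y::'a::complex_inner)"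
  by (simp add: scaleR_scaleC cinner_scaleC_right)
lemma cinner_sum_right: "cinner (x::'a::complex_inner) (sum f A) = (\<Sum>a\<in>A. cinner x (f a))"
  by (induct A rule: infinite_finite_induct) (auto simp: cinner_add_right)

lemma cinner_self: "cinner x x = complex_of_real ((norm (x::'a::complex_inner))\<^sup>2)"
proof -
  have "Re (cinner x x) = (norm x)\<^sup>2" using norm_eq_sqrt_cinner[of x] cinner_real_nonneg[of x] by simp
  then show ?thesis using cinner_real_nonneg[of x] by (simp add: complex_eq_iff)
qed
lemma Re_cinner_self: "Re (cinner x x) = (norm (x::'a::complex_inner))\<^sup>2" by (simp add: cinner_self)

lemma norm_add_sq: "(norm (x + y))\<^sup>2 = (norm x)\<^sup>2 + (norm y)\<^sup>2 + 2 * Re (cinner x (y::'a::complex_inner))"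
proof -
  have "cinner (x+y) (x+y) = cinner x x + cinner y y + (cinner x y + cinner y x)"
    by (simp add: cinner_add_left cinner_add_right algebra_simps)
  then have "Re (cinner (x+y) (x+y)) = Re (cinner x x) + Re (cinner y y) + 2 * Re (cinner x y)"
    by (subst (asm) cinner_commute[of y x]) simp
  then show ?thesis by (simp add: Re_cinner_self)
qed
lemma norm_diff_sq: "(norm (x - y))\<^sup>2 = (norm x)\<^sup>2 + (norm y)\<^sup>2 - 2 * Re (cinner x (y::'a::complex_inner))"
  using norm_add_sq[of x "-y"] by (simp add: cinner_minus_right)

lemma cauchy_schwarz: "cmod (cinner x y) \<le> norm x * norm (y::'a::complex_inner)"
proof (cases "y = 0")
  case True then show ?thesis by simp
next
  case False
  define t where "t = cinner y x / complex_of_real ((norm y)\<^sup>2)"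
  have ny: "norm y > 0" using False by simp
  have "0 \<le> (norm (x - t *\<^sub>C y))\<^sup>2" by simp
  also have "\<dots> = (norm x)\<^sup>2 + (cmod t)\<^sup>2 * (norm y)\<^sup>2 - 2 * Re (cinner x (t *\<^sub>C y))"
    by (simp add: norm_diff_sq norm_scaleC power_mult_distrib)
  also have "cinner x (t *\<^sub>C y) = t * cinner x y" by (simp add: cinner_scaleC_right)
  also have "t * cinner x y = complex_of_real ((cmod (cinner x y))\<^sup>2 / (norm y)\<^sup>2)"
    unfolding t_def using cinner_commute[of y x] complex_norm_square[of "cinner x y"]
    by (simp add: mult.commute)
  also have "cmod t = cmod (cinner x y) / (norm y)\<^sup>2"
    unfolding t_def using ny cinner_commute[of y x]
    by (simp add: norm_divide norm_power)
  finally have "0 \<le> (norm x)\<^sup>2 + (cmod (cinner x y) / (norm y)\<^sup>2)\<^sup>2 * (norm y)\<^sup>2 - 2 * ((cmod (cinner x y))\<^sup>2 / (norm y)\<^sup>2)"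
    by simp
  also have "(cmod (cinner x y) / (norm y)\<^sup>2)\<^sup>2 * (norm y)\<^sup>2 = (cmod (cinner x y))\<^sup>2 / (norm y)\<^sup>2"
    using ny by (simp add: power_divide field_simps power2_eq_square)
  finally have "(cmod (cinner x y))\<^sup>2 / (norm y)\<^sup>2 \<le> (norm x)\<^sup>2" by simp
  then have "(cmod (cinner x y))\<^sup>2 \<le> (norm x)\<^sup>2 * (norm y)\<^sup>2"
    using ny by (simp add: divide_le_eq)
  then have "(cmod (cinner x y))\<^sup>2 \<le> (norm x * norm y)\<^sup>2" by (simp add: power_mult_distrib)
  then show ?thesis by (rule power2_le_imp_le) simp
qed

lemma bounded_bilinear_cinner: "bounded_bilinear (cinner :: 'a::complex_inner \<Rightarrow> 'a \<Rightarrow> complex)"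
proof
  show "\<exists>K. \<forall>a b::'a. norm (cinner a b) \<le> norm a * norm b * K"
    by (rule exI[of _ 1]) (simp add: cauchy_schwarz)
qed (simp_all add: cinner_add_left cinner_add_right cinner_scaleR_left cinner_scaleR_right scaleR_conv_of_real)

lemma cinner_ext: "(\<And>z. cinner x z = cinner y z) \<Longrightarrow> x = (y::'a::complex_inner)"
  by (metis cinner_diff_left cinner_eq_zero_iff right_minus_eq)

lemma cinner_ext_right: "(\<And>z. cinner z x = cinner z y) \<Longrightarrow> x = (y::'a::complex_inner)"
  by (metis cinner_diff_right cinner_eq_zero_iff right_minus_eq)

definition csub :: "'a::complex_vector set \<Rightarrow> bool" where
  "csub M \<longleftrightarrow> 0 \<in> M \<and> (\<forall>x\<in>M. \<forall>y\<in>M. x + y \<in> M) \<and> (\<forall>a. \<forall>x\<in>M. a *\<^sub>C x \<in> M)"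

definition orth :: "'a::complex_inner set \<Rightarrow> 'a set" where
  "orth M = {y. \<forall>m\<in>M. cinner m y = 0}"

lemma csub_0: "csub M \<Longrightarrow> 0 \<in> M" by (simp add: csub_def)
lemma csub_add: "csub M \<Longrightarrow> x \<in> M \<Longrightarrow> y \<in> M \<Longrightarrow> x + y \<in> M" by (simp add: csub_def)
lemma csub_scaleC: "csub M \<Longrightarrow> x \<in> M \<Longrightarrow> a *\<^sub>C x \<in> M" by (simp add: csub_def)
lemma csub_scaleR: "csub M \<Longrightarrow> x \<in> M \<Longrightarrow> r *\<^sub>R x \<in> M" by (simp add: csub_def scaleR_scaleC)
lemma csub_minus: "csub M \<Longrightarrow> x \<in> M \<Longrightarrow> - x \<in> M"
  using csub_scaleR[of M x "-1"] by simp
lemma csub_diff: "csub M \<Longrightarrow> x \<in> M \<Longrightarrow> y \<in> M \<Longrightarrow> x - y \<in> M"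
  using csub_add[of M x "-y"] csub_minus[of M y] by simp

lemma parallelogram: "(norm (u + v))\<^sup>2 + (norm (u - v))\<^sup>2 = 2 * (norm u)\<^sup>2 + 2 * (norm (v::'a::complex_inner))\<^sup>2"
  by (simp add: norm_add_sq norm_diff_sq)

lemma closest_exists:
  fixes M :: "'a::chilbert_space set"
  assumes cl: "closed M" and sub: "csub M"
  shows "\<exists>y\<in>M. \<forall>m\<in>M. norm (x - y) \<le> norm (x - m)"
proof -
  define d where "d = Inf ((\<lambda>m. norm (x - m)) ` M)"
  have ne: "(\<lambda>m. norm (x - m)) ` M \<noteq> {}" using csub_0[OF sub] by auto
  have bdd: "bdd_below ((\<lambda>m. norm (x - m)) ` M)" by (rule bdd_belowI[of _ 0]) auto
  have d_le: "d \<le> norm (x - m)" if "m \<in> M" for m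
    unfolding d_def using bdd that by (auto intro!: cInf_lower)
  have d0: "0 \<le> d" unfolding d_def using ne by (auto intro!: cInf_greatest)
  have "\<exists>m\<in>M. (norm (x - m))\<^sup>2 < d\<^sup>2 + 1 / (real n + 1)" for n
  proof -
    have "d < sqrt (d\<^sup>2 + 1 / (real n + 1))"
      by (rule real_less_rsqrt) simp
    then obtain m where m: "m \<in> M" "norm (x - m) < sqrt (d\<^sup>2 + 1 / (real n + 1))"
      using cInf_lessD[OF ne, of "sqrt (d\<^sup>2 + 1 / (real n + 1))"] unfolding d_def by auto
    then have "(norm (x - m))\<^sup>2 < d\<^sup>2 + 1 / (real n + 1)"
      using power_strict_mono[OF m(2) norm_ge_zero, of 2] by simp
    with m show ?thesis by blast
  qed
  then obtain f where f: "\<And>n. f n \<in> M" "\<And>n. (norm (x - f n))\<^sup>2 < d\<^sup>2 + 1 / (real n + 1)"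
    by metis
  have fd: "(norm (f i - f j))\<^sup>2 \<le> 2 / (real i + 1) + 2 / (real j + 1)" for i j
  proof -
    have mid: "(1/2::real) *\<^sub>R (f i + f j) \<in> M" using f(1) sub by (intro csub_scaleR csub_add) auto
    have "2 * d \<le> 2 * norm (x - (1/2::real) *\<^sub>R (f i + f j))" using d_le[OF mid] by simp
    also have "2 * norm (x - (1/2::real) *\<^sub>R (f i + f j)) = norm ((x - f i) + (x - f j))"
    proof -
      have "(x - f i) + (x - f j) = 2 *\<^sub>R (x - (1/2::real) *\<^sub>R (f i + f j))"
        by (simp add: algebra_simps scaleR_2)
      then show ?thesis by simp
    qed
    finally have A: "(2 * d)\<^sup>2 \<le> (norm ((x - f i) + (x - f j)))\<^sup>2"
      using d0 by (intro power_mono) auto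
    have B: "(norm ((x - f i) + (x - f j)))\<^sup>2 + (norm ((x - f i) - (x - f j)))\<^sup>2
        = 2 * (norm (x - f i))\<^sup>2 + 2 * (norm (x - f j))\<^sup>2" by (rule parallelogram)
    have C: "norm ((x - f i) - (x - f j)) = norm (f i - f j)"
      by (simp add: norm_minus_commute)
    show ?thesis using A B C f(2)[of i] f(2)[of j] by (simp add: power_mult_distrib)
  qed
  have "Cauchy f"
  proof (rule CauchyI)
    fix e :: real assume e: "0 < e"
    obtain N :: nat where N0: "4 / e\<^sup>2 < real N" using reals_Archimedean2 by blast
    then have N: "4 / e\<^sup>2 < real N + 1" by simp
    have "4 / (real N + 1) < e\<^sup>2" using N e by (simp add: field_simps)
    show "\<exists>M. \<forall>m\<ge>M. \<forall>n\<ge>M. norm (f m - f n) < e"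
    proof (intro exI allI impI)
      fix m n assume mn: "N \<le> m" "N \<le> n"
      have "2 / (real m + 1) \<le> 2 / (real N + 1)" using mn by (intro divide_left_mono) auto
      moreover have "2 / (real n + 1) \<le> 2 / (real N + 1)" using mn by (intro divide_left_mono) auto
      ultimately have "(norm (f m - f n))\<^sup>2 < e\<^sup>2"
        using fd[of m n] \<open>4 / (real N + 1) < e\<^sup>2\<close> by simp
      then show "norm (f m - f n) < e" using e by (simp add: power_less_imp_less_base)
    qed
  qed
  then obtain y where y: "f \<longlonglongrightarrow> y" using Cauchy_convergent_iff convergent_def by blast
  have yM: "y \<in> M" using cl f(1) y closed_sequentially by blast
  have lim1: "(\<lambda>n. (norm (x - f n))\<^sup>2) \<longlonglongrightarrow> (norm (x - y))\<^sup>2"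
    by (intro tendsto_intros y)
  have e: "(\<lambda>n. 1 / (real n + 1)) = (\<lambda>n. inverse (real (Suc n)))"
    by (rule ext) (simp add: inverse_eq_divide)
  have lim2: "(\<lambda>n. d\<^sup>2 + 1 / (real n + 1)) \<longlonglongrightarrow> d\<^sup>2 + 0"
    by (rule tendsto_add[OF tendsto_const]) (unfold e, rule LIMSEQ_inverse_real_of_nat)
  have "(norm (x - y))\<^sup>2 \<le> d\<^sup>2 + 0"
    by (rule LIMSEQ_le[OF lim1 lim2]) (use f(2) in \<open>blast intro: less_imp_le\<close>)
  then have "norm (x - y) \<le> d" using d0 by (rule_tac power2_le_imp_le) simp_all
  then have "\<forall>m\<in>M. norm (x - y) \<le> norm (x - m)" using d_le by (blast intro: order_trans)
  then show ?thesis using yM by blast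
qed


lemma orth_proj_exists:
  fixes M :: "'a::chilbert_space set"
  assumes cl: "closed M" and sub: "csub M"
  shows "\<exists>y\<in>M. \<forall>m\<in>M. cinner m (x - y) = 0"
proof -
  obtain y where yM: "y \<in> M" and y: "\<And>m. m \<in> M \<Longrightarrow> norm (x - y) \<le> norm (x - m)"
    using closest_exists[OF cl sub, of x] by blast
  have "cinner m (x - y) = 0" if mM: "m \<in> M" for m
  proof (rule ccontr)
    define w where "w = cinner m (x - y)"
    define z where "z = x - y"
    assume "cinner m (x - y) \<noteq> 0"
    then have w0: "cmod w > 0" unfolding w_def by simp
    define s where "s = 1 / ((norm m)\<^sup>2 + 1)"
    have "0 < (norm m)\<^sup>2 + 1" by (rule add_nonneg_pos) simp_all
    then have s0: "s > 0" unfolding s_def by simp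
    have s1: "s * (norm m)\<^sup>2 < 1" unfolding s_def using \<open>0 < (norm m)\<^sup>2 + 1\<close>
      by (simp add: divide_less_eq)
    define t where "t = complex_of_real s * w"
    have "y + t *\<^sub>C m \<in> M" using sub yM mM by (intro csub_add csub_scaleC)
    then have "norm z \<le> norm (z - t *\<^sub>C m)" using y[of "y + t *\<^sub>C m"] unfolding z_def
      by (simp add: algebra_simps)
    then have "(norm z)\<^sup>2 \<le> (norm (z - t *\<^sub>C m))\<^sup>2" by (rule power_mono) simp
    also have "(norm (z - t *\<^sub>C m))\<^sup>2 = (norm z)\<^sup>2 + (norm (t *\<^sub>C m))\<^sup>2 - 2 * Re (cinner z (t *\<^sub>C m))"
      by (rule norm_diff_sq)
    also have "cinner z (t *\<^sub>C m) = complex_of_real (s * (cmod w)\<^sup>2)"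
    proof -
      have "cinner z (t *\<^sub>C m) = t * cnj w" unfolding w_def z_def
        by (simp add: cinner_scaleC_right cinner_commute[of "x - y" m])
      also have "\<dots> = complex_of_real s * (w * cnj w)" unfolding t_def by (simp add: mult.assoc)
      also have "w * cnj w = complex_of_real ((cmod w)\<^sup>2)" by (rule complex_norm_square[symmetric])
      finally show ?thesis by simp
    qed
    also have "(norm (t *\<^sub>C m))\<^sup>2 = s\<^sup>2 * (cmod w)\<^sup>2 * (norm m)\<^sup>2"
      unfolding t_def using s0 by (simp add: norm_scaleC norm_mult power_mult_distrib)
    finally have "2 * (s * (cmod w)\<^sup>2) \<le> s\<^sup>2 * (cmod w)\<^sup>2 * (norm m)\<^sup>2" by simp
    then have "2 * s * (cmod w)\<^sup>2 \<le> (s * (norm m)\<^sup>2) * (s * (cmod w)\<^sup>2)" by (simp add: power2_eq_square algebra_simps)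
    also have "\<dots> < 1 * (s * (cmod w)\<^sup>2)" using s1 s0 w0 by (intro mult_strict_right_mono) simp_all
    finally show False using s0 w0 by simp
  qed
  with yM show ?thesis by blast
qed

lemma orth_proj_unique_aux:
  fixes M :: "'a::complex_inner set"
  assumes sub: "csub M" and "y1 \<in> M" "y2 \<in> M"
    and "\<forall>m\<in>M. cinner m (x - y1) = 0" "\<forall>m\<in>M. cinner m (x - y2) = 0"
  shows "y1 = y2"
proof -
  have d: "y1 - y2 \<in> M" using assms csub_diff by blast
  have "cinner (y1 - y2) (y1 - y2) = cinner (y1 - y2) (x - y2) - cinner (y1 - y2) (x - y1)"
    by (simp add: cinner_diff_right)
  also have "\<dots> = 0" using assms d by simp
  finally have "y1 - y2 = 0" by (simp only: cinner_eq_zero_iff)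
  then show ?thesis by simp
qed

lemma orth_proj_char:
  fixes M :: "'a::chilbert_space set"
  assumes cl: "closed M" and sub: "csub M"
  shows "orth_proj M x \<in> M \<and> (\<forall>m\<in>M. cinner m (x - orth_proj M x) = 0)"
proof -
  have "\<exists>!y. y \<in> M \<and> (\<forall>m\<in>M. cinner m (x - y) = 0)"
    using orth_proj_exists[OF cl sub, of x] orth_proj_unique_aux[OF sub] by blast
  then show ?thesis unfolding orth_proj_def by (rule theI')
qed

lemma orth_proj_in: "closed M \<Longrightarrow> csub M \<Longrightarrow> orth_proj M x \<in> (M::'a::chilbert_space set)"
  using orth_proj_char by blast
lemma orth_proj_orth: "closed M \<Longrightarrow> csub M \<Longrightarrow> m \<in> M \<Longrightarrow> cinner m (x - orth_proj M x) = 0"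
  for M :: "'a::chilbert_space set"
  using orth_proj_char by blast

lemma orth_proj_eq:
  fixes M :: "'a::chilbert_space set"
  assumes cl: "closed M" and sub: "csub M" and "y \<in> M" and "\<And>m. m \<in> M \<Longrightarrow> cinner m (x - y) = 0"
  shows "orth_proj M x = y"
  using orth_proj_unique_aux[OF sub orth_proj_in[OF cl sub] \<open>y \<in> M\<close>, of x] orth_proj_char[OF cl sub, of x] assms(4)
  by blast

context
  fixes M :: "'a::chilbert_space set"
  assumes cl: "closed M" and sub: "csub M"
begin

lemma orth_proj_add: "orth_proj M (x + y) = orth_proj M x + orth_proj M y"
proof (rule orth_proj_eq[OF cl sub])
  show "orth_proj M x + orth_proj M y \<in> M" by (intro csub_add[OF sub] orth_proj_in[OF cl sub])
  fix m assume m: "m \<in> M"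
  have eq: "x + y - (orth_proj M x + orth_proj M y) = (x - orth_proj M x) + (y - orth_proj M y)"
    by (simp add: algebra_simps)
  show "cinner m (x + y - (orth_proj M x + orth_proj M y)) = 0"
    using orth_proj_orth[OF cl sub m, of x] orth_proj_orth[OF cl sub m, of y]
    by (simp only: eq cinner_add_right) simp
qed


lemma orth_proj_scaleC: "orth_proj M (a *\<^sub>C x) = a *\<^sub>C orth_proj M x"
proof (rule orth_proj_eq[OF cl sub])
  show "a *\<^sub>C orth_proj M x \<in> M" by (intro csub_scaleC[OF sub] orth_proj_in[OF cl sub])
  fix m assume m: "m \<in> M"
  show "cinner m (a *\<^sub>C x - a *\<^sub>C orth_proj M x) = 0"
    using orth_proj_orth[OF cl sub m, of x]
    by (simp only: scaleC_diff_right[symmetric] cinner_scaleC_right) simp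
qed

lemma orth_proj_fix: "m \<in> M \<Longrightarrow> orth_proj M m = m"
  by (rule orth_proj_eq[OF cl sub]) simp_all

lemma orth_proj_idem: "orth_proj M (orth_proj M x) = orth_proj M x"
  by (rule orth_proj_fix[OF orth_proj_in[OF cl sub]])

lemma orth_proj_pyth: "(norm x)\<^sup>2 = (norm (orth_proj M x))\<^sup>2 + (norm (x - orth_proj M x))\<^sup>2"
proof -
  have "x = orth_proj M x + (x - orth_proj M x)" by simp
  then have "(norm x)\<^sup>2 = (norm (orth_proj M x + (x - orth_proj M x)))\<^sup>2" by simp
  also have "\<dots> = (norm (orth_proj M x))\<^sup>2 + (norm (x - orth_proj M x))\<^sup>2"
    unfolding norm_add_sq using orth_proj_orth[OF cl sub orth_proj_in[OF cl sub], of x x] by simp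
  finally show ?thesis .
qed

lemma orth_proj_norm: "norm (orth_proj M x) \<le> norm x"
  using orth_proj_pyth[of x] by (intro power2_le_imp_le[of "norm (orth_proj M x)" "norm x"]) simp_all

lemma orth_proj_diff: "orth_proj M (x - y) = orth_proj M x - orth_proj M y"
  using orth_proj_add[of "x - y" y] by simp

lemma orth_proj_bounded_clinear: "bounded_clinear (orth_proj M)"
  unfolding bounded_clinear_def
proof (intro conjI allI)
  show "bounded_linear (orth_proj M)"
  proof
    show "orth_proj M (x + y) = orth_proj M x + orth_proj M y" for x y by (rule orth_proj_add)
    show "orth_proj M (r *\<^sub>R x) = r *\<^sub>R orth_proj M x" for r x
      by (simp add: scaleR_scaleC orth_proj_scaleC)
    show "\<exists>K. \<forall>x. norm (orth_proj M x) \<le> norm x * K"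
      by (rule exI[of _ 1]) (simp add: orth_proj_norm)
  qed
qed (rule orth_proj_scaleC)

lemma orth_proj_selfadj: "cinner (orth_proj M x) y = cinner x (orth_proj M y)"
proof -
  have a: "cinner (orth_proj M x) (y - orth_proj M y) = 0"
    by (rule orth_proj_orth[OF cl sub orth_proj_in[OF cl sub]])
  have b: "cinner (orth_proj M y) (x - orth_proj M x) = 0"
    by (rule orth_proj_orth[OF cl sub orth_proj_in[OF cl sub]])
  have "cinner (orth_proj M x) y = cinner (orth_proj M x) (orth_proj M y)"
    using a by (simp add: cinner_diff_right)
  moreover have "cinner x (orth_proj M y) = cinner (orth_proj M x) (orth_proj M y)"
  proof -
    have "cinner (x - orth_proj M x) (orth_proj M y) = 0"
      using b by (subst cinner_commute) simp
    then show ?thesis by (simp add: cinner_diff_left)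
  qed
  ultimately show ?thesis by simp
qed

lemma orth_proj_zero_iff: "orth_proj M x = 0 \<longleftrightarrow> x \<in> orth M"
proof
  assume "orth_proj M x = 0"
  then show "x \<in> orth M" using orth_proj_orth[OF cl sub, of _ x] unfolding orth_def by simp
next
  assume "x \<in> orth M"
  then show "orth_proj M x = 0"
    by (intro orth_proj_eq[OF cl sub] csub_0[OF sub]) (simp add: orth_def)
qed

lemma orth_proj_residual_orth: "x - orth_proj M x \<in> orth M"
  unfolding orth_def using orth_proj_orth[OF cl sub] by blast

end

lemma orth_closed: "closed (orth (M::'a::complex_inner set))"
proof -
  have "orth M = (\<Inter>m\<in>M. {y. cinner m y = 0})" unfolding orth_def by auto
  moreover have "closed {y. cinner m y = 0}" for m :: 'a
  proof -
    have "continuous_on UNIV (cinner m)"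
      using bounded_bilinear.bounded_linear_right[OF bounded_bilinear_cinner]
      by (intro linear_continuous_on) auto
    then show ?thesis using closed_Collect_eq[of "cinner m" "\<lambda>_. 0"]
      by (simp add: continuous_on_const)
  qed
  ultimately show ?thesis by auto
qed

lemma orth_csub: "csub (orth (M::'a::complex_inner set))"
  unfolding csub_def orth_def by (auto simp: cinner_add_right cinner_scaleC_right)

lemma orth_orth:
  fixes M :: "'a::chilbert_space set"
  assumes cl: "closed M" and sub: "csub M"
  shows "orth (orth M) = M"
proof
  show "M \<subseteq> orth (orth M)" unfolding orth_def
  proof safe
    fix m y assume "m \<in> M" "\<forall>m\<in>M. cinner m y = 0"
    then have "cinner m y = 0" by blast
    then show "cinner y m = 0" by (subst cinner_commute) simp
  qed
  show "orth (orth M) \<subseteq> M"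
  proof
    fix x assume x: "x \<in> orth (orth M)"
    have r: "x - orth_proj M x \<in> orth M" by (rule orth_proj_residual_orth[OF cl sub])
    then have "cinner (x - orth_proj M x) x = 0" using x unfolding orth_def by blast
    moreover have "cinner (x - orth_proj M x) (orth_proj M x) = 0"
    proof -
      have "cinner (orth_proj M x) (x - orth_proj M x) = 0"
        using r orth_proj_in[OF cl sub] unfolding orth_def by blast
      then show ?thesis by (subst cinner_commute) simp
    qed
    ultimately have "cinner (x - orth_proj M x) (x - orth_proj M x) = 0"
      by (simp add: cinner_diff_right)
    then have "x = orth_proj M x" by (simp only: cinner_eq_zero_iff) simp
    then show "x \<in> M" using orth_proj_in[OF cl sub] by metis
  qed
qed

lemma orth_proj_orth_compl:
  fixes M :: "'a::chilbert_space set"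
  assumes cl: "closed M" and sub: "csub M"
  shows "orth_proj (orth M) x = x - orth_proj M x"
proof (rule orth_proj_eq[OF orth_closed orth_csub])
  show "x - orth_proj M x \<in> orth M" by (rule orth_proj_residual_orth[OF cl sub])
  fix n assume n: "n \<in> orth M"
  have "cinner (orth_proj M x) n = 0" using n orth_proj_in[OF cl sub] unfolding orth_def by blast
  then have "cinner n (orth_proj M x) = 0" by (subst cinner_commute) simp
  then show "cinner n (x - (x - orth_proj M x)) = 0" by simp
qed

lemma orth_closure: "orth (closure S) = orth (S::'a::complex_inner set)"
proof
  show "orth (closure S) \<subseteq> orth S" unfolding orth_def using closure_subset by blast
  show "orth S \<subseteq> orth (closure S)"
  proof
    fix y assume y: "y \<in> orth S"
    have "continuous_on UNIV (\<lambda>m. cinner m y)"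
      using bounded_bilinear.bounded_linear_left[OF bounded_bilinear_cinner]
      by (intro linear_continuous_on) auto
    then have "closed {m. cinner m y = 0}" using closed_Collect_eq[of "\<lambda>m. cinner m y" "\<lambda>_. 0"]
      by (simp add: continuous_on_const)
    moreover have "S \<subseteq> {m. cinner m y = 0}" using y unfolding orth_def by blast
    ultimately have "closure S \<subseteq> {m. cinner m y = 0}" by (rule closure_minimal[rotated])
    then show "y \<in> orth (closure S)" unfolding orth_def by blast
  qed
qed

lemma csub_closure:
  fixes S :: "'a::complex_normed_vector set"
  assumes sub: "csub S"
  shows "csub (closure S)"
proof -
  have lin_scaleC: "bounded_linear (\<lambda>x::'a. a *\<^sub>C x)" for a
  proof
    show "a *\<^sub>C (x + y) = a *\<^sub>C x + a *\<^sub>C y" for x y :: 'a by (rule scaleC_add_right)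
    show "a *\<^sub>C (r *\<^sub>R x) = r *\<^sub>R (a *\<^sub>C x)" for r and x :: 'a
    proof -
      have "a *\<^sub>C (r *\<^sub>R x) = a *\<^sub>C (complex_of_real r *\<^sub>C x)" by (simp only: scaleC_of_real)
      also have "\<dots> = (a * complex_of_real r) *\<^sub>C x" by (rule scaleC_scaleC)
      also have "\<dots> = (complex_of_real r * a) *\<^sub>C x" by (simp only: mult.commute)
      also have "\<dots> = complex_of_real r *\<^sub>C (a *\<^sub>C x)" by (rule scaleC_scaleC[symmetric])
      finally show ?thesis by (simp only: scaleC_of_real)
    qed
    show "\<exists>K. \<forall>x::'a. norm (a *\<^sub>C x) \<le> norm x * K"
      by (rule exI[of _ "cmod a"]) (simp add: norm_scaleC mult.commute)
  qed
  have img: "f ` closure S \<subseteq> closure S" if "continuous_on UNIV f" "f ` S \<subseteq> S" for f :: "'a \<Rightarrow> 'a"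
  proof (rule image_closure_subset)
    show "continuous_on (closure S) f" using that(1) by (rule continuous_on_subset) simp
    show "f ` S \<subseteq> closure S" using that(2) closure_subset by blast
  qed simp
  have "0 \<in> closure S" using csub_0[OF sub] closure_subset by blast
  moreover have "a *\<^sub>C x \<in> closure S" if "x \<in> closure S" for a x
  proof -
    have "(\<lambda>x. a *\<^sub>C x) ` closure S \<subseteq> closure S"
    proof (rule img)
      show "continuous_on UNIV (\<lambda>x::'a. a *\<^sub>C x)" using lin_scaleC[of a] by (rule linear_continuous_on)
      show "(\<lambda>x::'a. a *\<^sub>C x) ` S \<subseteq> S" using sub csub_scaleC by blast
    qed
    then show ?thesis using that by blast
  qed
  moreover have "x + y \<in> closure S" if "x \<in> closure S" "y \<in> closure S" for x y
  proof -
    have "(\<lambda>x. x + y) ` closure S \<subseteq> closure S" if "y \<in> S" for y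
    proof (rule img)
      show "continuous_on UNIV (\<lambda>x. x + y)" by (intro continuous_intros)
      show "(\<lambda>x. x + y) ` S \<subseteq> S" using sub csub_add that by blast
    qed
    then have h: "(\<lambda>y. x + y) ` S \<subseteq> closure S" if "x \<in> closure S" for x using that by blast
    have "(\<lambda>y. x + y) ` closure S \<subseteq> closure S" if "x \<in> closure S" for x
    proof (rule image_closure_subset)
      show "continuous_on (closure S) (\<lambda>y. x + y)" by (intro continuous_intros)
      show "(\<lambda>y. x + y) ` S \<subseteq> closure S" using h that by blast
    qed simp
    then show ?thesis using that by blast
  qed
  ultimately show ?thesis unfolding csub_def by blast
qed

lemma csub_range: "bounded_clinear T \<Longrightarrow> csub (range T)"
proof -
  assume T: "bounded_clinear T"
  then have l: "bounded_linear T" and s: "\<And>a x. T (a *\<^sub>C x) = a *\<^sub>C T x" unfolding bounded_clinear_def by auto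
  have "0 \<in> range T" using linear_simps(3)[OF l] by (metis rangeI)
  moreover have "T x + T y \<in> range T" for x y using linear_simps(1)[OF l, of x y] by (metis rangeI)
  moreover have "a *\<^sub>C T x \<in> range T" for a x using s[of a x] by (metis rangeI)
  ultimately show ?thesis unfolding csub_def by blast
qed

lemma riesz:
  fixes f :: "'a::chilbert_space \<Rightarrow> complex"
  assumes lin: "bounded_linear f" and sc: "\<And>a x. f (a *\<^sub>C x) = a * f x"
  shows "\<exists>z. \<forall>x. f x = cinner z x"
proof (cases "\<forall>x. f x = 0")
  case True then show ?thesis by (intro exI[of _ 0]) simp
next
  case False
  then obtain w where fw: "f w \<noteq> 0" by blast
  define K where "K = {x. f x = 0}"
  have clK: "closed K" unfolding K_def
    using closed_Collect_eq[of f "\<lambda>_. 0"] linear_continuous_on[OF lin] by (simp add: continuous_on_const)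
  have subK: "csub K" unfolding K_def csub_def
    using linear_simps[OF lin] sc by simp
  define u where "u = w - orth_proj K w"
  have uK: "u \<in> orth K" unfolding u_def by (rule orth_proj_residual_orth[OF clK subK])
  have PK: "orth_proj K w \<in> K" by (rule orth_proj_in[OF clK subK])
  have fu: "f u = f w" unfolding u_def using PK linear_simps(2)[OF lin] by (simp add: K_def)
  then have u0: "u \<noteq> 0" using fw linear_simps(3)[OF lin] by auto
  have "f x = cinner ((cnj (f u) / complex_of_real ((norm u)\<^sup>2)) *\<^sub>C u) x" for x
  proof -
    have "f (f x *\<^sub>C u - f u *\<^sub>C x) = 0" using linear_simps(2)[OF lin] sc by (simp add: mult.commute)
    then have "f x *\<^sub>C u - f u *\<^sub>C x \<in> K" unfolding K_def by simp
    then have "cinner (f x *\<^sub>C u - f u *\<^sub>C x) u = 0" using uK unfolding orth_def by blast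
    then have "cnj (f x) * cinner u u - cnj (f u) * cinner x u = 0"
      by (simp add: cinner_diff_left cinner_scaleC_left)
    then have "cnj (cnj (f x) * cinner u u - cnj (f u) * cinner x u) = 0" by simp
    then have "f x * complex_of_real ((norm u)\<^sup>2) = f u * cinner u x"
      by (simp add: cinner_commute[of x u] cinner_self)
    moreover have "complex_of_real ((norm u)\<^sup>2) \<noteq> 0" using u0 by simp
    ultimately have "f x = f u * cinner u x / complex_of_real ((norm u)\<^sup>2)"
      by (simp add: field_simps)
    then show ?thesis by (simp add: cinner_scaleC_left)
  qed
  then show ?thesis by blast
qed

definition selfadj :: "('a::complex_inner \<Rightarrow> 'a) \<Rightarrow> bool" where
  "selfadj A \<longleftrightarrow> (\<forall>x y. cinner (A x) y = cinner x (A y))"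

lemma adj_eq:
  assumes "\<And>x y. cinner (S x) y = cinner x (T y)"
  shows "adj T = S"
  unfolding adj_def
proof (rule the_equality)
  show "\<forall>x y. cinner (S x) y = cinner x (T y)" using assms by blast
  fix S' assume "\<forall>x y. cinner (S' x) y = cinner x (T y)"
  then show "S' = S" using assms by (intro ext cinner_ext) simp
qed

lemma bounded_clinear_linear: "bounded_clinear T \<Longrightarrow> bounded_linear T"
  by (simp add: bounded_clinear_def)
lemma bounded_clinear_scaleC: "bounded_clinear T \<Longrightarrow> T (a *\<^sub>C x) = a *\<^sub>C T x"
  by (simp add: bounded_clinear_def)

lemma adj_exists:
  fixes T :: "'a::chilbert_space \<Rightarrow> 'a"
  assumes T: "bounded_clinear T"
  shows "\<exists>S. \<forall>x y. cinner (S x) y = cinner x (T y)"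
proof -
  have "\<exists>z. \<forall>y. cinner x (T y) = cinner z y" for x
  proof (rule riesz)
    show "bounded_linear (\<lambda>y. cinner x (T y))"
      using bounded_linear_compose[OF bounded_bilinear.bounded_linear_right[OF bounded_bilinear_cinner]
          bounded_clinear_linear[OF T]] by simp
    show "cinner x (T (a *\<^sub>C y)) = a * cinner x (T y)" for a y
      by (simp add: bounded_clinear_scaleC[OF T] cinner_scaleC_right)
  qed
  then obtain S where "\<And>x y. cinner x (T y) = cinner (S x) y" by metis
  then show ?thesis by metis
qed

lemma adj_char:
  fixes T :: "'a::chilbert_space \<Rightarrow> 'a"
  assumes T: "bounded_clinear T"
  shows "cinner (adj T x) y = cinner x (T y)"
proof -
  obtain S where S: "\<And>x y. cinner (S x) y = cinner x (T y)" using adj_exists[OF T] by blast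
  show ?thesis using adj_eq[OF S] S by simp
qed

lemma adj_char2:
  fixes T :: "'a::chilbert_space \<Rightarrow> 'a"
  assumes T: "bounded_clinear T"
  shows "cinner x (adj T y) = cinner (T x) y"
  using adj_char[OF T, of y x] by (metis cinner_commute)

lemma bounded_clinear_intro:
  fixes S :: "'a::complex_normed_vector \<Rightarrow> 'b::complex_normed_vector"
  assumes "\<And>x y. S (x + y) = S x + S y" "\<And>a x. S (a *\<^sub>C x) = a *\<^sub>C S x"
    and "\<And>x. norm (S x) \<le> norm x * K"
  shows "bounded_clinear S"
  unfolding bounded_clinear_def
proof (intro conjI allI)
  show "bounded_linear S"
  proof
    show "S (r *\<^sub>R x) = r *\<^sub>R S x" for r x using assms(2) by (simp add: scaleR_scaleC)
  qed (use assms in blast)+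
qed (rule assms(2))

lemma adj_bounded_clinear:
  fixes T :: "'a::chilbert_space \<Rightarrow> 'a"
  assumes T: "bounded_clinear T"
  shows "bounded_clinear (adj T)"
proof -
  obtain K where K: "\<And>x. norm (T x) \<le> norm x * K" "K > 0"
    using bounded_linear.pos_bounded[OF bounded_clinear_linear[OF T]] by blast
  show ?thesis
  proof (rule bounded_clinear_intro)
    show "adj T (x + y) = adj T x + adj T y" for x y
      by (rule cinner_ext) (simp add: adj_char[OF T] cinner_add_left)
    show "adj T (a *\<^sub>C x) = a *\<^sub>C adj T x" for a x
      by (rule cinner_ext) (simp add: adj_char[OF T] cinner_scaleC_left)
    show "norm (adj T x) \<le> norm x * K" for x
    proof -
      have "(norm (adj T x))\<^sup>2 = Re (cinner (adj T x) (adj T x))" by (simp add: Re_cinner_self)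
      also have "\<dots> = Re (cinner x (T (adj T x)))" by (simp add: adj_char[OF T])
      also have "\<dots> \<le> cmod (cinner x (T (adj T x)))" by (rule complex_Re_le_cmod)
      also have "\<dots> \<le> norm x * norm (T (adj T x))" by (rule cauchy_schwarz)
      also have "\<dots> \<le> norm x * (norm (adj T x) * K)" by (rule mult_left_mono[OF K(1)]) simp
      finally have "norm (adj T x) * norm (adj T x) \<le> (norm x * K) * norm (adj T x)"
        by (simp add: power2_eq_square algebra_simps)
      show ?thesis
      proof (cases "adj T x = 0")
        case True then show ?thesis using K(2) by simp
      next
        case False
        then have "0 < norm (adj T x)" by simp
        with \<open>norm (adj T x) * norm (adj T x) \<le> (norm x * K) * norm (adj T x)\<close>
        show ?thesis by (rule mult_right_le_imp_le)
      qed
    qed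
  qed
qed

lemma adj_adj:
  fixes T :: "'a::chilbert_space \<Rightarrow> 'a"
  assumes T: "bounded_clinear T"
  shows "adj (adj T) = T"
  by (rule adj_eq) (simp add: adj_char2[OF T])

lemma adj_selfadj: "selfadj A \<Longrightarrow> adj A = A"
  unfolding selfadj_def by (rule adj_eq) simp

lemma selfadj_adj_comp:
  fixes T :: "'a::chilbert_space \<Rightarrow> 'a"
  assumes T: "bounded_clinear T"
  shows "selfadj (adj T \<circ> T)"
  unfolding selfadj_def by (simp add: adj_char[OF T] adj_char2[OF T])

lemma bounded_clinear_comp:
  "bounded_clinear S \<Longrightarrow> bounded_clinear T \<Longrightarrow> bounded_clinear (S \<circ> T)"
  unfolding bounded_clinear_def by (auto intro: bounded_linear_compose simp: o_def)

lemma bounded_clinear_id: "bounded_clinear (\<lambda>x. x)"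
  unfolding bounded_clinear_def by (simp add: bounded_linear_ident)

lemma bounded_clinear_add: "bounded_clinear S \<Longrightarrow> bounded_clinear T \<Longrightarrow> bounded_clinear (\<lambda>x. S x + T x)"
  unfolding bounded_clinear_def by (auto intro: bounded_linear_add simp: scaleC_add_right)

lemma bounded_clinear_diff: "bounded_clinear S \<Longrightarrow> bounded_clinear T \<Longrightarrow> bounded_clinear (\<lambda>x. S x - T x)"
  unfolding bounded_clinear_def by (auto intro: bounded_linear_sub simp: scaleC_diff_right)

lemma bounded_clinear_scaleR: "bounded_clinear S \<Longrightarrow> bounded_clinear (\<lambda>x. r *\<^sub>R S x)"
proof -
  assume S: "bounded_clinear S"
  have "bounded_linear (\<lambda>x. r *\<^sub>R S x)"
    using bounded_linear_compose[OF bounded_linear_scaleR_right bounded_clinear_linear[OF S]] by simp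
  moreover have "r *\<^sub>R S (a *\<^sub>C x) = a *\<^sub>C (r *\<^sub>R S x)" for a x
    by (simp add: bounded_clinear_scaleC[OF S] scaleR_scaleC scaleC_scaleC mult.commute)
  ultimately show ?thesis unfolding bounded_clinear_def by blast
qed

lemma cinner_quad_add:
  fixes S :: "'a::complex_inner \<Rightarrow> 'a"
  assumes S: "bounded_clinear S"
  shows "cinner (u + v) (S (u + v)) = cinner u (S u) + cinner v (S v) + cinner u (S v) + cinner v (S u)"
proof -
  have "S (u + v) = S u + S v" using linear_simps(1)[OF bounded_clinear_linear[OF S]] .
  then show ?thesis by (simp add: cinner_add_left cinner_add_right)
qed

lemma polarization_selfadj:
  fixes S :: "'a::complex_inner \<Rightarrow> 'a"
  assumes S: "bounded_clinear S" and im: "\<And>x. Im (cinner x (S x)) = 0"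
  shows "selfadj S"
  unfolding selfadj_def
proof (intro allI)
  fix u v :: 'a
  define a where "a = cinner u (S v)"
  define b where "b = cinner v (S u)"
  have 1: "Im (a + b) = 0"
    using im[of "u + v"] im[of u] im[of v] unfolding cinner_quad_add[OF S] a_def b_def by simp
  have sc: "S (\<i> *\<^sub>C v) = \<i> *\<^sub>C S v" by (rule bounded_clinear_scaleC[OF S])
  have q: "cinner (\<i> *\<^sub>C v) (S (\<i> *\<^sub>C v)) = cinner v (S v)"
    unfolding sc by (simp add: cinner_scaleC_left cinner_scaleC_right)
  have "Im (cinner u (S (\<i> *\<^sub>C v)) + cinner (\<i> *\<^sub>C v) (S u)) = 0"
    using im[of "u + \<i> *\<^sub>C v"] im[of u] im[of v] unfolding cinner_quad_add[OF S] q by simp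
  then have 2: "Re a - Re b = 0"
    unfolding sc a_def b_def by (simp add: cinner_scaleC_left cinner_scaleC_right)
  have "a = cnj b" using 1 2 by (simp add: complex_eq_iff)
  then show "cinner (S u) v = cinner u (S v)" unfolding a_def b_def
    by (metis cinner_commute)
qed

lemma positive_selfadj: "positive_op S \<Longrightarrow> selfadj S"
  unfolding positive_op_def by (intro polarization_selfadj) auto

lemma positive_zero:
  fixes S :: "'a::complex_inner \<Rightarrow> 'a"
  assumes S: "positive_op S" and w: "Re (cinner w (S w)) = 0"
  shows "S w = 0"
proof -
  have bS: "bounded_clinear S" and pos: "\<And>x. 0 \<le> Re (cinner x (S x))"
    using S unfolding positive_op_def by auto
  have sa: "\<And>x y. cinner (S x) y = cinner x (S y)" using positive_selfadj[OF S] unfolding selfadj_def by blast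
  define a where "a = (norm (S w))\<^sup>2"
  define b where "b = Re (cinner (S w) (S (S w)))"
  have b0: "0 \<le> b" unfolding b_def by (rule pos)
  have key: "0 \<le> 2 * t * a + t\<^sup>2 * b" for t :: real
  proof -
    have ST: "S (t *\<^sub>R S w) = t *\<^sub>R S (S w)"
      using linear_simps(5)[OF bounded_clinear_linear[OF bS]] by blast
    have "cinner (w + t *\<^sub>R S w) (S (w + t *\<^sub>R S w)) =
        cinner w (S w) + cinner (t *\<^sub>R S w) (S (t *\<^sub>R S w)) + cinner w (S (t *\<^sub>R S w)) + cinner (t *\<^sub>R S w) (S w)"
      by (rule cinner_quad_add[OF bS])
    also have "\<dots> = cinner w (S w) + complex_of_real (t\<^sup>2) * cinner (S w) (S (S w))
        + complex_of_real t * cinner (S w) (S w) + complex_of_real t * cinner (S w) (S w)"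
      unfolding ST by (simp add: cinner_scaleR_left cinner_scaleR_right sa power2_eq_square)
    finally have "Re (cinner (w + t *\<^sub>R S w) (S (w + t *\<^sub>R S w))) = 2 * t * a + t\<^sup>2 * b"
      using w unfolding a_def b_def by (simp add: cinner_self)
    then show ?thesis using pos[of "w + t *\<^sub>R S w"] by simp
  qed
  have "a = 0"
  proof (rule ccontr)
    assume "a \<noteq> 0"
    then have a0: "a > 0" unfolding a_def by simp
    define s where "s = a / (b + 1)"
    have bp: "b + 1 > 0" using b0 by simp
    have s0: "s > 0" unfolding s_def using a0 bp by simp
    have "0 \<le> 2 * (- s) * a + (- s)\<^sup>2 * b" by (rule key)
    then have "s * (2 * a) \<le> s * (s * b)" by (simp add: power2_eq_square algebra_simps)
    then have "2 * a \<le> s * b" using s0 by (rule mult_left_le_imp_le)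
    also have "s * b = a * (b / (b + 1))" unfolding s_def by simp
    also have "\<dots> \<le> a * 1" using a0 bp by (intro mult_left_mono) simp_all
    finally show False using a0 by simp
  qed
  then show ?thesis unfolding a_def by simp
qed

function cf :: "nat \<Rightarrow> real" where
  "cf n = (if n = 0 then 0 else if n = 1 then 1/2 else (\<Sum>i\<in>{1..<n}. cf i * cf (n - i)) / 2)"
  by auto
termination by (relation "Wellfounded.measure id") auto

declare cf.simps[simp del]

lemma cf_0: "cf 0 = 0" by (simp add: cf.simps)
lemma cf_1: "cf 1 = 1/2" by (simp add: cf.simps)
lemma cf_Suc0[simp]: "cf (Suc 0) = 1/2" using cf_1 by simp
lemma cf_ge2: "n \<ge> 2 \<Longrightarrow> cf n = (\<Sum>i\<in>{1..<n}. cf i * cf (n - i)) / 2"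
  by (subst cf.simps) simp

lemma cf_nonneg: "0 \<le> cf n"
proof (induction n rule: less_induct)
  case (less n)
  show ?case
  proof (cases "n \<ge> 2")
    case True
    have "\<forall>i\<in>{1..<n}. 0 \<le> cf i * cf (n - i)" using less True by auto
    then have "0 \<le> (\<Sum>i\<in>{1..<n}. cf i * cf (n - i))" by (intro sum_nonneg) blast
    then show ?thesis using True by (simp add: cf_ge2)
  next
    case False
    then have "n = 0 \<or> n = 1" by auto
    then show ?thesis by (auto simp: cf_0 cf_1)
  qed
qed

lemma cf_conv: "(\<Sum>i\<le>n. cf i * cf (n - i)) = 2 * cf n - (if n = 1 then 1 else 0)"
proof -
  consider "n = 0" | "n = 1" | "n \<ge> 2" by linarith
  then show ?thesis
  proof cases
    case 1 then show ?thesis by (simp add: cf_0)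
  next
    case 2 then show ?thesis by (simp add: cf_0 cf_1)
  next
    case 3
    have "{..n} = insert 0 (insert n {1..<n})" using 3 by auto
    then have "(\<Sum>i\<le>n. cf i * cf (n - i)) = cf 0 * cf n + (cf n * cf 0 + (\<Sum>i\<in>{1..<n}. cf i * cf (n - i)))"
      using 3 by simp
    then show ?thesis using 3 by (simp add: cf_0 cf_ge2)
  qed
qed

lemma cf_partial_le: "(\<Sum>i<N. cf i) \<le> 1"
proof (induction N rule: less_induct)
  case (less N)
  show ?case
  proof (cases "N \<le> 2")
    case True
    then have "{..<N} \<subseteq> {0, 1}" by auto
    then have "(\<Sum>i<N. cf i) \<le> (\<Sum>i\<in>{0,1}. cf i)"
      by (intro sum_mono2) (simp_all add: cf_nonneg)
    then show ?thesis by (simp add: cf_0 cf_1)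
  next
    case False
    define s where "s = (\<Sum>i<N - 1. cf i)"
    have s1: "s \<le> 1" unfolding s_def using False by (intro less) auto
    have s0: "0 \<le> s" unfolding s_def by (simp add: sum_nonneg cf_nonneg)
    have split: "{..<N} = {0, 1} \<union> {2..<N}" using False by auto
    have "(\<Sum>i<N. cf i) = (\<Sum>i\<in>{0,1}. cf i) + (\<Sum>n\<in>{2..<N}. cf n)"
      unfolding split by (rule sum.union_disjoint) auto
    also have "(\<Sum>n\<in>{2..<N}. cf n) = (\<Sum>n\<in>{2..<N}. \<Sum>i\<in>{1..<n}. cf i * cf (n - i)) / 2"
      by (simp add: cf_ge2 sum_divide_distrib)
    also have "(\<Sum>n\<in>{2..<N}. \<Sum>i\<in>{1..<n}. cf i * cf (n - i)) \<le> s * s"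
    proof -
      define h where "h = (\<lambda>(n::nat, i::nat). (i, n - i))"
      define D where "D = Sigma {2..<N} (\<lambda>n. {1..<n})"
      have "(\<Sum>n\<in>{2..<N}. \<Sum>i\<in>{1..<n}. cf i * cf (n - i)) = (\<Sum>(n, i)\<in>D. cf i * cf (n - i))"
        unfolding D_def by (rule sum.Sigma) auto
      also have "\<dots> = (\<Sum>p\<in>h ` D. cf (fst p) * cf (snd p))"
      proof (subst sum.reindex)
        show "inj_on h D" unfolding inj_on_def h_def D_def by auto
      qed (simp add: h_def case_prod_beta)
      also have "\<dots> \<le> (\<Sum>p\<in>{..<N - 1} \<times> {..<N - 1}. cf (fst p) * cf (snd p))"
      proof (rule sum_mono2)
        show "h ` D \<subseteq> {..<N - 1} \<times> {..<N - 1}" unfolding h_def D_def by auto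
      qed (simp_all add: cf_nonneg)
      also have "\<dots> = s * s" unfolding s_def by (simp add: sum_product sum.cartesian_product case_prod_beta)
      finally show ?thesis .
    qed
    finally have "(\<Sum>i<N. cf i) \<le> (\<Sum>i\<in>{0,1}. cf i) + s * s / 2" by simp
    also have "s * s \<le> 1" using s0 s1 by (simp add: mult_le_one)
    finally show ?thesis by (simp add: cf_0 cf_1)
  qed
qed

lemma cf_summable: "summable cf"
  using cf_partial_le cf_nonneg
  by (intro summableI_nonneg_bounded[of _ 1]) auto

lemma cf_suminf_le: "suminf cf \<le> 1"
  using cf_summable cf_partial_le by (intro suminf_le_const) auto

subclass (in chilbert_space) banach ..

lemma cauchy_gen:
  fixes g :: "nat \<times> nat \<Rightarrow> 'a::real_normed_vector" and f :: "nat \<times> nat \<Rightarrow> real"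
  assumes f0: "\<And>p. 0 \<le> f p" and gf: "\<And>p. norm (g p) \<le> f p"
    and conv: "convergent (\<lambda>n. sum f ({..<n} \<times> {..<n}))"
    and lim: "(\<lambda>n. sum g ({..<n} \<times> {..<n})) \<longlonglongrightarrow> L"
  shows "(\<lambda>n. sum g {(i,j). i + j < n}) \<longlonglongrightarrow> L"
proof -
  let ?S1 = "\<lambda>n::nat. {..<n} \<times> {..<n}"
  let ?S2 = "\<lambda>n::nat. {(i,j). i + j < n}"
  have S1_mono: "\<And>m n. m \<le> n \<Longrightarrow> ?S1 m \<subseteq> ?S1 n" by auto
  have S2_le_S1: "\<And>n. ?S2 n \<subseteq> ?S1 n" by auto
  have S1_le_S2: "\<And>n. ?S1 (n div 2) \<subseteq> ?S2 n" by auto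
  have finite_S1: "\<And>n. finite (?S1 n)" by simp
  with S2_le_S1 have finite_S2: "\<And>n. finite (?S2 n)" by (rule finite_subset)
  have norm_sum_f: "\<And>A. norm (sum f A) = sum f A"
    unfolding real_norm_def using f0 by (simp only: abs_of_nonneg sum_nonneg)
  have Cauchy: "Cauchy (\<lambda>n. sum f (?S1 n))" using conv by (rule convergent_Cauchy)
  have "Zfun (\<lambda>n. sum f (?S1 n - ?S2 n)) sequentially"
  proof (rule ZfunI, simp only: eventually_sequentially norm_sum_f)
    fix r :: real
    assume r: "0 < r"
    from CauchyD [OF Cauchy r] obtain N
      where "\<forall>m\<ge>N. \<forall>n\<ge>N. norm (sum f (?S1 m) - sum f (?S1 n)) < r" ..
    then have "\<And>m n. N \<le> n \<Longrightarrow> n \<le> m \<Longrightarrow> norm (sum f (?S1 m - ?S1 n)) < r"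
      by (simp only: sum_diff finite_S1 S1_mono)
    then have N: "\<And>m n. N \<le> n \<Longrightarrow> n \<le> m \<Longrightarrow> sum f (?S1 m - ?S1 n) < r"
      by (simp only: norm_sum_f)
    show "\<exists>N. \<forall>n\<ge>N. sum f (?S1 n - ?S2 n) < r"
    proof (intro exI allI impI)
      fix n
      assume "2 * N \<le> n"
      then have n: "N \<le> n div 2" by simp
      have "sum f (?S1 n - ?S2 n) \<le> sum f (?S1 n - ?S1 (n div 2))"
        by (intro sum_mono2 finite_Diff finite_S1 f0 Diff_mono subset_refl S1_le_S2)
      also have "\<dots> < r"
        using n div_le_dividend by (rule N)
      finally show "sum f (?S1 n - ?S2 n) < r" .
    qed
  qed
  then have "Zfun (\<lambda>n. sum g (?S1 n - ?S2 n)) sequentially"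
    apply (rule Zfun_le [rule_format])
    apply (simp only: norm_sum_f)
    apply (rule order_trans [OF norm_sum sum_mono])
    apply (rule gf)
    done
  then have 2: "(\<lambda>n. sum g (?S1 n) - sum g (?S2 n)) \<longlonglongrightarrow> 0"
    unfolding tendsto_Zfun_iff diff_0_right
    by (simp only: sum_diff finite_S1 S2_le_S1)
  with lim show ?thesis
    by (rule Lim_transform2)
qed

definition contr :: "('a::complex_normed_vector \<Rightarrow> 'a) \<Rightarrow> bool" where
  "contr Y \<longleftrightarrow> bounded_clinear Y \<and> (\<forall>v. norm (Y v) \<le> norm v)"

definition ser :: "('a::real_normed_vector \<Rightarrow> 'a) \<Rightarrow> 'a \<Rightarrow> 'a" where
  "ser Y v = (\<Sum>k. cf k *\<^sub>R (Y ^^ k) v)"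

lemma contr_pow_bcl: "contr Y \<Longrightarrow> bounded_clinear (Y ^^ k)"
proof (induction k)
  case 0 then show ?case using bounded_clinear_id by (simp add: id_def)
next
  case (Suc k)
  then show ?case using bounded_clinear_comp[of Y "Y ^^ k"] unfolding contr_def funpow.simps(2) by blast
qed

lemma contr_pow_norm: "contr Y \<Longrightarrow> norm ((Y ^^ k) v) \<le> norm v"
proof (induction k)
  case 0 then show ?case by simp
next
  case (Suc k)
  have "norm (Y ((Y ^^ k) v)) \<le> norm ((Y ^^ k) v)" using Suc.prems unfolding contr_def by blast
  then show ?case using Suc by simp
qed

context
  fixes Y :: "'a::chilbert_space \<Rightarrow> 'a"
  assumes Y: "contr Y"
begin

lemma ser_norm_summable: "summable (\<lambda>k. norm (cf k *\<^sub>R (Y ^^ k) v))"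
proof (rule summable_comparison_test')
  show "summable (\<lambda>k. cf k * norm v)" by (rule summable_mult2[OF cf_summable])
  show "norm (norm (cf k *\<^sub>R (Y ^^ k) v)) \<le> cf k * norm v" for k
    using contr_pow_norm[OF Y, of k v] cf_nonneg[of k] by (simp add: mult_left_mono)
qed

lemma ser_summable: "summable (\<lambda>k. cf k *\<^sub>R (Y ^^ k) v)"
  by (rule summable_norm_cancel) (rule ser_norm_summable)

lemma ser_norm: "norm (ser Y v) \<le> norm v"
proof -
  have "norm (ser Y v) \<le> (\<Sum>k. norm (cf k *\<^sub>R (Y ^^ k) v))"
    unfolding ser_def by (rule summable_norm) (rule ser_norm_summable)
  also have "\<dots> \<le> (\<Sum>k. cf k * norm v)"
  proof (rule suminf_le)
    show "norm (cf k *\<^sub>R (Y ^^ k) v) \<le> cf k * norm v" for k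
      using contr_pow_norm[OF Y, of k v] cf_nonneg[of k] by (simp add: mult_left_mono)
  qed (rule ser_norm_summable, rule summable_mult2[OF cf_summable])
  also have "\<dots> = suminf cf * norm v" by (rule suminf_mult2[OF cf_summable, symmetric])
  also have "\<dots> \<le> 1 * norm v" by (rule mult_right_mono[OF cf_suminf_le]) simp
  finally show ?thesis by simp
qed

lemma ser_comm_gen:
  fixes K :: "'a \<Rightarrow> 'b::chilbert_space" and Y' :: "'b \<Rightarrow> 'b"
  assumes K: "bounded_linear K" and comm: "\<And>v. K (Y v) = Y' (K v)"
  shows "K (ser Y v) = (\<Sum>k. cf k *\<^sub>R (Y' ^^ k) (K v))"
proof -
  have pow: "K ((Y ^^ k) v) = (Y' ^^ k) (K v)" for k
    by (induction k) (simp_all add: comm)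
  have "K (ser Y v) = (\<Sum>k. K (cf k *\<^sub>R (Y ^^ k) v))"
    unfolding ser_def by (rule bounded_linear.suminf[OF K ser_summable])
  also have "\<dots> = (\<Sum>k. cf k *\<^sub>R (Y' ^^ k) (K v))"
    using linear_simps(5)[OF K] pow by simp
  finally show ?thesis .
qed

lemma ser_add: "ser Y (v + w) = ser Y v + ser Y w"
proof -
  have "(\<lambda>k. cf k *\<^sub>R (Y ^^ k) (v + w)) = (\<lambda>k. cf k *\<^sub>R (Y ^^ k) v + cf k *\<^sub>R (Y ^^ k) w)"
    using linear_simps(1)[OF bounded_clinear_linear[OF contr_pow_bcl[OF Y]]] by (simp add: scaleR_add_right)
  then show ?thesis unfolding ser_def by (simp add: suminf_add[OF ser_summable ser_summable])
qed

lemma ser_lin: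
  assumes "bounded_linear L" "\<And>k v. (Y ^^ k) (L v) = L ((Y ^^ k) v)"
  shows "ser Y (L v) = L (ser Y v)"
proof -
  have "L (ser Y v) = (\<Sum>k. L (cf k *\<^sub>R (Y ^^ k) v))"
    unfolding ser_def by (rule bounded_linear.suminf[OF assms(1) ser_summable])
  also have "\<dots> = ser Y (L v)"
    unfolding ser_def using linear_simps(5)[OF assms(1)] assms(2) by simp
  finally show ?thesis by simp
qed

lemma ser_sq: "ser Y (ser Y v) = 2 *\<^sub>R ser Y v - Y v"
proof -
  define w where "w n = (Y ^^ n) v" for n
  define g where "g = (\<lambda>(i, j). (cf i * cf j) *\<^sub>R w (i + j))"
  define f where "f = (\<lambda>(i::nat, j::nat). cf i * cf j * norm v)"
  define u where "u n = (\<Sum>j<n. cf j *\<^sub>R w j)" for n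
  define Qn where "Qn n z = (\<Sum>i<n. cf i *\<^sub>R (Y ^^ i) z)" for n z
  have lin: "bounded_linear (Y ^^ k)" for k by (rule bounded_clinear_linear[OF contr_pow_bcl[OF Y]])
  have f0: "0 \<le> f p" for p unfolding f_def using cf_nonneg by (auto simp: case_prod_beta)
  have gf: "norm (g p) \<le> f p" for p
  proof -
    obtain i j where p: "p = (i, j)" by force
    have "norm (w (i + j)) \<le> norm v" unfolding w_def by (rule contr_pow_norm[OF Y])
    then show ?thesis unfolding p g_def f_def using cf_nonneg[of i] cf_nonneg[of j]
      by (simp add: mult_left_mono)
  qed
  have conv: "convergent (\<lambda>n. sum f ({..<n} \<times> {..<n}))"
  proof -
    have "sum f ({..<n} \<times> {..<n}) = (\<Sum>i<n. cf i) * (\<Sum>j<n. cf j) * norm v" for n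
    proof -
      have "sum f ({..<n} \<times> {..<n}) = (\<Sum>i<n. \<Sum>j<n. cf i * cf j * norm v)"
        unfolding f_def by (rule sum.cartesian_product[symmetric])
      also have "\<dots> = (\<Sum>i<n. \<Sum>j<n. cf i * cf j) * norm v"
        by (simp add: sum_distrib_right)
      also have "\<dots> = (\<Sum>i<n. cf i) * (\<Sum>j<n. cf j) * norm v"
        by (simp only: sum_product)
      finally show ?thesis .
    qed
    moreover have "(\<lambda>n. (\<Sum>i<n. cf i) * (\<Sum>j<n. cf j) * norm v) \<longlonglongrightarrow> suminf cf * suminf cf * norm v"
      by (intro tendsto_intros summable_LIMSEQ[OF cf_summable])
    ultimately show ?thesis unfolding convergent_def by auto
  qed
  have Su: "u \<longlonglongrightarrow> ser Y v" unfolding u_def w_def ser_def by (rule summable_LIMSEQ[OF ser_summable])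
  have gS1: "sum g ({..<n} \<times> {..<n}) = Qn n (u n)" for n
  proof -
    have "Qn n (u n) = (\<Sum>i<n. cf i *\<^sub>R (\<Sum>j<n. cf j *\<^sub>R (Y ^^ i) (w j)))"
      unfolding Qn_def u_def using linear_simps(5)[OF lin] by (simp add: linear_sum[OF bounded_linear.linear[OF lin]])
    also have "\<dots> = (\<Sum>i<n. \<Sum>j<n. (cf i * cf j) *\<^sub>R w (i + j))"
      unfolding w_def by (simp add: scaleR_sum_right funpow_add)
    also have "\<dots> = sum g ({..<n} \<times> {..<n})"
      unfolding g_def by (simp add: sum.cartesian_product)
    finally show ?thesis by simp
  qed
  have lim: "(\<lambda>n. sum g ({..<n} \<times> {..<n})) \<longlonglongrightarrow> ser Y (ser Y v)"
  proof -
    have a: "(\<lambda>n. Qn n (ser Y v)) \<longlonglongrightarrow> ser Y (ser Y v)"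
      unfolding Qn_def ser_def[of Y "ser Y v"] by (rule summable_LIMSEQ[OF ser_summable])
    have b: "(\<lambda>n. Qn n (u n) - Qn n (ser Y v)) \<longlonglongrightarrow> 0"
    proof (rule Lim_null_comparison)
      have "norm (Qn n (u n) - Qn n (ser Y v)) \<le> norm (u n - ser Y v)" for n
      proof -
        have "Qn n (u n) - Qn n (ser Y v) = Qn n (u n - ser Y v)"
          unfolding Qn_def using linear_simps(2)[OF lin] by (simp add: sum_subtractf scaleR_diff_right)
        also have "norm (Qn n (u n - ser Y v)) \<le> (\<Sum>i<n. norm (cf i *\<^sub>R (Y ^^ i) (u n - ser Y v)))"
          unfolding Qn_def by (rule norm_sum)
        also have "\<dots> \<le> (\<Sum>i<n. cf i * norm (u n - ser Y v))"
          using contr_pow_norm[OF Y] cf_nonneg by (intro sum_mono) (simp add: mult_left_mono)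
        also have "\<dots> = (\<Sum>i<n. cf i) * norm (u n - ser Y v)" by (simp add: sum_distrib_right)
        also have "\<dots> \<le> 1 * norm (u n - ser Y v)" by (rule mult_right_mono[OF cf_partial_le]) simp
        finally show ?thesis by simp
      qed
      then show "\<forall>\<^sub>F n in sequentially. norm (Qn n (u n) - Qn n (ser Y v)) \<le> norm (u n - ser Y v)"
        by simp
      show "(\<lambda>n. norm (u n - ser Y v)) \<longlonglongrightarrow> 0" using Su by (simp add: tendsto_norm_zero_iff LIM_zero_iff)
    qed
    have "(\<lambda>n. (Qn n (u n) - Qn n (ser Y v)) + Qn n (ser Y v)) \<longlonglongrightarrow> 0 + ser Y (ser Y v)"
      by (rule tendsto_add[OF b a])
    then show ?thesis unfolding gS1 by simp
  qed
  have S2: "(\<lambda>n. sum g {(i,j). i + j < n}) \<longlonglongrightarrow> ser Y (ser Y v)"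
    by (rule cauchy_gen[OF f0 gf conv lim])
  have tri: "sum g {(i,j). i + j < n} = (\<Sum>k<n. (2 * cf k - (if k = 1 then 1 else 0)) *\<^sub>R w k)" for n
  proof -
    have "sum g {(i,j). i + j < n} = (\<Sum>k<n. \<Sum>i\<le>k. (cf i * cf (k - i)) *\<^sub>R w (i + (k - i)))"
      unfolding g_def by (rule sum.triangle_reindex)
    also have "\<dots> = (\<Sum>k<n. (\<Sum>i\<le>k. cf i * cf (k - i)) *\<^sub>R w k)"
      by (simp add: scaleR_sum_left)
    also have "\<dots> = (\<Sum>k<n. (2 * cf k - (if k = 1 then 1 else 0)) *\<^sub>R w k)"
      by (simp only: cf_conv)
    finally show ?thesis .
  qed
  have sums1: "(\<lambda>k. (2 * cf k - (if k = 1 then 1 else 0)) *\<^sub>R w k) sums ser Y (ser Y v)"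
    unfolding sums_def using S2 unfolding tri .
  have sums2: "(\<lambda>k. (2 * cf k - (if k = 1 then 1 else 0)) *\<^sub>R w k) sums (2 *\<^sub>R ser Y v - Y v)"
  proof -
    have A: "(\<lambda>k. 2 *\<^sub>R (cf k *\<^sub>R w k)) sums (2 *\<^sub>R ser Y v)"
      unfolding ser_def w_def by (intro sums_scaleR_right summable_sums ser_summable)
    have B: "(\<lambda>k. if k = 1 then w k else 0) sums w 1" by (rule sums_single)
    have "(\<lambda>k. 2 *\<^sub>R (cf k *\<^sub>R w k) - (if k = 1 then w k else 0)) sums (2 *\<^sub>R ser Y v - w 1)"
      by (rule sums_diff[OF A B])
    moreover have "(\<lambda>k. 2 *\<^sub>R (cf k *\<^sub>R w k) - (if k = 1 then w k else 0))
        = (\<lambda>k. (2 * cf k - (if k = 1 then 1 else 0)) *\<^sub>R w k)"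
      by (rule ext) (simp add: scaleR_diff_left)
    moreover have "w 1 = Y v" unfolding w_def by simp
    ultimately show ?thesis by simp
  qed
  show ?thesis using sums_unique2[OF sums1 sums2] .
qed

end

lemma bounded_linear_scaleC: "bounded_linear (\<lambda>x::'a::complex_normed_vector. a *\<^sub>C x)"
proof
  show "a *\<^sub>C (x + y) = a *\<^sub>C x + a *\<^sub>C y" for x y :: 'a by (rule scaleC_add_right)
  show "a *\<^sub>C (r *\<^sub>R x) = r *\<^sub>R (a *\<^sub>C x)" for r and x :: 'a
  proof -
    have "a *\<^sub>C (r *\<^sub>R x) = a *\<^sub>C (complex_of_real r *\<^sub>C x)" by (simp only: scaleC_of_real)
    also have "\<dots> = (a * complex_of_real r) *\<^sub>C x" by (rule scaleC_scaleC)
    also have "\<dots> = (complex_of_real r * a) *\<^sub>C x" by (simp only: mult.commute)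
    also have "\<dots> = complex_of_real r *\<^sub>C (a *\<^sub>C x)" by (rule scaleC_scaleC[symmetric])
    finally show ?thesis by (simp only: scaleC_of_real)
  qed
  show "\<exists>K. \<forall>x::'a. norm (a *\<^sub>C x) \<le> norm x * K"
    by (rule exI[of _ "cmod a"]) (simp add: norm_scaleC mult.commute)
qed

definition pos_hyp :: "('a::chilbert_space \<Rightarrow> 'a) \<Rightarrow> real \<Rightarrow> bool" where
  "pos_hyp X M \<longleftrightarrow> bounded_clinear X \<and> selfadj X \<and> (\<forall>v. 0 \<le> Re (cinner v (X v))) \<and> 0 < M \<and>
     (\<forall>v. (norm (X v))\<^sup>2 \<le> M * Re (cinner v (X v)))"

definition Ymap :: "('a::chilbert_space \<Rightarrow> 'a) \<Rightarrow> real \<Rightarrow> 'a \<Rightarrow> 'a" where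
  "Ymap X M = (\<lambda>v. v - (1 / M) *\<^sub>R X v)"

definition sqM :: "('a::chilbert_space \<Rightarrow> 'a) \<Rightarrow> real \<Rightarrow> 'a \<Rightarrow> 'a" where
  "sqM X M = (\<lambda>v. sqrt M *\<^sub>R (v - ser (Ymap X M) v))"

definition psqrt :: "('a::chilbert_space \<Rightarrow> 'a) \<Rightarrow> 'a \<Rightarrow> 'a" where
  "psqrt X = (THE S. positive_op S \<and> S \<circ> S = X)"

lemma pos_hyp_mono: "pos_hyp X M \<Longrightarrow> M \<le> M' \<Longrightarrow> pos_hyp X M'"
  unfolding pos_hyp_def
proof (elim conjE, intro conjI allI)
  fix v
  assume "\<forall>v. 0 \<le> Re (cinner v (X v))" "\<forall>v. (norm (X v))\<^sup>2 \<le> M * Re (cinner v (X v))" "M \<le> M'"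
  then show "(norm (X v))\<^sup>2 \<le> M' * Re (cinner v (X v))"
    by (meson mult_right_mono order_trans)
qed auto

lemma selfadj_pow: "selfadj Y \<Longrightarrow> selfadj (Y ^^ k)"
proof (induction k)
  case 0 then show ?case by (simp add: selfadj_def)
next
  case (Suc k)
  then show ?case unfolding selfadj_def by (simp add: funpow_swap1)
qed

context
  fixes X :: "'a::chilbert_space \<Rightarrow> 'a" and M :: real
  assumes H: "pos_hyp X M"
begin

lemma H_bcl: "bounded_clinear X" and H_sa: "selfadj X" and H_pos: "\<And>v. 0 \<le> Re (cinner v (X v))"
  and H_M: "0 < M" and H_bd: "\<And>v. (norm (X v))\<^sup>2 \<le> M * Re (cinner v (X v))"
  using H unfolding pos_hyp_def by auto

lemma Ymap_bcl: "bounded_clinear (Ymap X M)"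
  unfolding Ymap_def by (intro bounded_clinear_diff bounded_clinear_id bounded_clinear_scaleR H_bcl)

lemma Ymap_sa: "selfadj (Ymap X M)"
  using H_sa unfolding selfadj_def Ymap_def by (simp add: cinner_diff_left cinner_diff_right cinner_scaleR_left cinner_scaleR_right)

lemma Ymap_contr: "contr (Ymap X M)"
  unfolding contr_def
proof (intro conjI allI Ymap_bcl)
  fix v
  define r where "r = Re (cinner v (X v))"
  have r0: "0 \<le> r" unfolding r_def by (rule H_pos)
  have "(norm (Ymap X M v))\<^sup>2 = (norm v)\<^sup>2 + (norm ((1 / M) *\<^sub>R X v))\<^sup>2 - 2 * Re (cinner v ((1 / M) *\<^sub>R X v))"
    unfolding Ymap_def by (rule norm_diff_sq)
  also have "Re (cinner v ((1 / M) *\<^sub>R X v)) = r / M" unfolding r_def by (simp add: cinner_scaleR_right)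
  also have "(norm ((1 / M) *\<^sub>R X v))\<^sup>2 = (norm (X v))\<^sup>2 / M\<^sup>2"
    using H_M by (simp add: power_divide)
  also have "(norm (X v))\<^sup>2 / M\<^sup>2 \<le> M * r / M\<^sup>2"
    using H_bd[of v] H_M unfolding r_def by (simp add: divide_right_mono)
  also have "M * r / M\<^sup>2 = r / M" using H_M by (simp add: power2_eq_square)
  finally have "(norm (Ymap X M v))\<^sup>2 \<le> (norm v)\<^sup>2 - r / M" by simp
  also have "\<dots> \<le> (norm v)\<^sup>2" using r0 H_M by simp
  finally show "norm (Ymap X M v) \<le> norm v" by (rule power2_le_imp_le) simp
qed

lemma ser_selfadj: "cinner (ser (Ymap X M) v) w = cinner v (ser (Ymap X M) w)"
proof -
  let ?Y = "Ymap X M"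
  have bl1: "bounded_linear (\<lambda>z. cinner z w)" by (rule bounded_bilinear.bounded_linear_left[OF bounded_bilinear_cinner])
  have bl2: "bounded_linear (\<lambda>z. cinner v z)" by (rule bounded_bilinear.bounded_linear_right[OF bounded_bilinear_cinner])
  have sa: "cinner ((?Y ^^ k) v) w = cinner v ((?Y ^^ k) w)" for k
    using selfadj_pow[OF Ymap_sa, of k] unfolding selfadj_def by blast
  have "cinner (ser ?Y v) w = (\<Sum>k. cinner (cf k *\<^sub>R (?Y ^^ k) v) w)"
    unfolding ser_def by (rule bounded_linear.suminf[OF bl1 ser_summable[OF Ymap_contr]])
  also have "\<dots> = (\<Sum>k. cinner v (cf k *\<^sub>R (?Y ^^ k) w))"
    by (simp add: cinner_scaleR_left cinner_scaleR_right sa)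
  also have "\<dots> = cinner v (ser ?Y w)"
    unfolding ser_def by (rule bounded_linear.suminf[OF bl2 ser_summable[OF Ymap_contr], symmetric])
  finally show ?thesis .
qed

lemma ser_scaleC': "ser (Ymap X M) (a *\<^sub>C v) = a *\<^sub>C ser (Ymap X M) v"
  by (rule ser_lin[OF Ymap_contr bounded_linear_scaleC])
    (simp add: bounded_clinear_scaleC[OF contr_pow_bcl[OF Ymap_contr]])

lemma ser_scaleR': "ser (Ymap X M) (a *\<^sub>R v) = a *\<^sub>R ser (Ymap X M) v"
  by (rule ser_lin[OF Ymap_contr bounded_linear_scaleR_right])
    (simp add: linear_simps(5)[OF bounded_clinear_linear[OF contr_pow_bcl[OF Ymap_contr]]])

lemma ser_diff': "ser (Ymap X M) (v - w) = ser (Ymap X M) v - ser (Ymap X M) w"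
  using ser_add[OF Ymap_contr, of "v - w" w] by simp

lemma sqM_bcl: "bounded_clinear (sqM X M)"
proof (rule bounded_clinear_intro[where K = "sqrt M * 2"])
  show "sqM X M (x + y) = sqM X M x + sqM X M y" for x y
    unfolding sqM_def by (simp add: ser_add[OF Ymap_contr] algebra_simps)
  show "sqM X M (a *\<^sub>C x) = a *\<^sub>C sqM X M x" for a x
    unfolding sqM_def by (simp add: ser_scaleC' scaleC_diff_right scaleR_scaleC scaleC_scaleC mult.commute)
  show "norm (sqM X M x) \<le> norm x * (sqrt M * 2)" for x
  proof -
    have "norm (x - ser (Ymap X M) x) \<le> norm x + norm (ser (Ymap X M) x)" by (rule norm_triangle_ineq4)
    also have "\<dots> \<le> norm x * 2" using ser_norm[OF Ymap_contr, of x] by simp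
    finally show ?thesis unfolding sqM_def using H_M
      by (simp add: mult_left_mono mult.commute mult.left_commute)
  qed
qed

lemma sqM_sa: "selfadj (sqM X M)"
  unfolding selfadj_def sqM_def
  by (simp add: cinner_scaleR_left cinner_scaleR_right cinner_diff_left cinner_diff_right ser_selfadj)

lemma sqM_positive: "positive_op (sqM X M)"
  unfolding positive_op_def
proof (intro conjI allI sqM_bcl)
  fix v
  have "cinner v (sqM X M v) = cnj (cinner v (sqM X M v))"
    using sqM_sa unfolding selfadj_def by (metis cinner_commute)
  then have "Im (cinner v (sqM X M v)) = Im (cnj (cinner v (sqM X M v)))" by (rule arg_cong)
  then show "Im (cinner v (sqM X M v)) = 0" by simp
  have "Re (cinner v (ser (Ymap X M) v)) \<le> cmod (cinner v (ser (Ymap X M) v))" by (rule complex_Re_le_cmod)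
  also have "\<dots> \<le> norm v * norm (ser (Ymap X M) v)" by (rule cauchy_schwarz)
  also have "\<dots> \<le> norm v * norm v" by (rule mult_left_mono[OF ser_norm[OF Ymap_contr]]) simp
  finally have le: "Re (cinner v (ser (Ymap X M) v)) \<le> (norm v)\<^sup>2" by (simp add: power2_eq_square)
  have "Re (cinner v (sqM X M v)) = sqrt M * ((norm v)\<^sup>2 - Re (cinner v (ser (Ymap X M) v)))"
    unfolding sqM_def by (simp add: cinner_scaleR_right cinner_diff_right Re_cinner_self)
  also have "\<dots> \<ge> 0" using le H_M by simp
  finally show "0 \<le> Re (cinner v (sqM X M v))" .
qed

lemma sqM_square: "sqM X M (sqM X M v) = X v"
proof -
  let ?s = "ser (Ymap X M)"
  have "sqM X M (sqM X M v) = sqrt M *\<^sub>R (sqrt M *\<^sub>R (v - ?s v) - ?s (sqrt M *\<^sub>R (v - ?s v)))"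
    unfolding sqM_def by simp
  also have "?s (sqrt M *\<^sub>R (v - ?s v)) = sqrt M *\<^sub>R (?s v - ?s (?s v))"
    by (simp add: ser_scaleR' ser_diff')
  also have "?s (?s v) = 2 *\<^sub>R ?s v - Ymap X M v" by (rule ser_sq[OF Ymap_contr])
  finally have "sqM X M (sqM X M v) = (sqrt M * sqrt M) *\<^sub>R (v - Ymap X M v)"
    by (simp add: algebra_simps scaleR_2)
  also have "sqrt M * sqrt M = M" using H_M by simp
  also have "v - Ymap X M v = (1 / M) *\<^sub>R X v" unfolding Ymap_def by simp
  finally show ?thesis using H_M by simp
qed

end

lemma sqM_comm:
  fixes X X' K :: "'a::chilbert_space \<Rightarrow> 'a"
  assumes H: "pos_hyp X M" and H': "pos_hyp X' M" and K: "bounded_clinear K"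
    and comm: "\<And>v. K (X v) = X' (K v)"
  shows "K (sqM X M v) = sqM X' M (K v)"
proof -
  have Kl: "bounded_linear K" by (rule bounded_clinear_linear[OF K])
  have commY: "K (Ymap X M v) = Ymap X' M (K v)" for v
    unfolding Ymap_def using linear_simps(2,5)[OF Kl] comm by simp
  have "K (ser (Ymap X M) v) = (\<Sum>k. cf k *\<^sub>R (Ymap X' M ^^ k) (K v))"
    by (rule ser_comm_gen[OF Ymap_contr[OF H] Kl commY])
  also have "\<dots> = ser (Ymap X' M) (K v)" unfolding ser_def ..
  finally show ?thesis unfolding sqM_def using linear_simps(2,5)[OF Kl] by simp
qed

lemma sqM_unique:
  fixes X S :: "'a::chilbert_space \<Rightarrow> 'a"
  assumes H: "pos_hyp X M" and S: "positive_op S" and SS: "S \<circ> S = X"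
  shows "S = sqM X M"
proof -
  define R where "R = sqM X M"
  have bS: "bounded_clinear S" using S unfolding positive_op_def by blast
  have R: "positive_op R" unfolding R_def by (rule sqM_positive[OF H])
  have RR: "R (R v) = X v" for v unfolding R_def by (rule sqM_square[OF H])
  have SSv: "S (S v) = X v" for v using SS by (metis comp_apply)
  have SX: "S (X v) = X (S v)" for v using SSv by metis
  have SR: "S (R v) = R (S v)" for v unfolding R_def by (rule sqM_comm[OF H H bS SX])
  have saS: "cinner (S x) y = cinner x (S y)" for x y using positive_selfadj[OF S] unfolding selfadj_def by blast
  have saR: "cinner (R x) y = cinner x (R y)" for x y using positive_selfadj[OF R] unfolding selfadj_def by blast
  have lS: "bounded_linear S" by (rule bounded_clinear_linear[OF bS])
  have lR: "bounded_linear R" using R unfolding positive_op_def bounded_clinear_def by blast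
  define D where "D v = S v - R v" for v
  have saD: "cinner (D x) y = cinner x (D y)" for x y
    unfolding D_def by (simp add: cinner_diff_left cinner_diff_right saS saR)
  have Dsum: "D (S w + R w) = 0" for w
    unfolding D_def using linear_simps(1)[OF lS] linear_simps(1)[OF lR] SR SSv RR by simp
  have DD: "D (D x) = 0" for x
  proof -
    define w where "w = D x"
    have "cinner w (S w + R w) = cinner x (D (S w + R w))" unfolding w_def by (rule saD)
    then have "cinner w (S w) + cinner w (R w) = 0" by (simp add: Dsum cinner_add_right)
    then have "Re (cinner w (S w)) + Re (cinner w (R w)) = 0" by (metis plus_complex.sel(1) zero_complex.sel(1))
    moreover have "0 \<le> Re (cinner w (S w))" "0 \<le> Re (cinner w (R w))"
      using S R unfolding positive_op_def by auto
    ultimately have "Re (cinner w (S w)) = 0" "Re (cinner w (R w)) = 0" by linarith+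
    then have "S w = 0" "R w = 0" using positive_zero[OF S] positive_zero[OF R] by auto
    then show ?thesis unfolding w_def by (simp add: D_def[of "D x"])
  qed
  have "D x = 0" for x
  proof -
    have "cinner (D x) (D x) = cinner x (D (D x))" by (rule saD)
    then have "cinner (D x) (D x) = 0" by (simp add: DD)
    then show ?thesis by (simp only: cinner_eq_zero_iff)
  qed
  then show ?thesis unfolding R_def[symmetric] by (intro ext) (simp add: D_def)
qed

lemma psqrt_eq:
  assumes H: "pos_hyp X M"
  shows "psqrt X = sqM X M"
  unfolding psqrt_def
proof (rule the_equality)
  show "positive_op (sqM X M) \<and> sqM X M \<circ> sqM X M = X"
    using sqM_positive[OF H] sqM_square[OF H] by (auto simp: o_def)
  show "S = sqM X M" if "positive_op S \<and> S \<circ> S = X" for S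
    using sqM_unique[OF H] that by blast
qed

lemma psqrt_positive: "pos_hyp X M \<Longrightarrow> positive_op (psqrt X)"
  using psqrt_eq sqM_positive by metis

lemma psqrt_square: "pos_hyp X M \<Longrightarrow> psqrt X (psqrt X v) = X v"
  using psqrt_eq sqM_square by metis

lemma psqrt_comm:
  fixes X X' K :: "'a::chilbert_space \<Rightarrow> 'a"
  assumes H: "pos_hyp X M" and H': "pos_hyp X' M'" and K: "bounded_clinear K"
    and comm: "\<And>v. K (X v) = X' (K v)"
  shows "K (psqrt X v) = psqrt X' (K v)"
proof -
  have H1: "pos_hyp X (max M M')" by (rule pos_hyp_mono[OF H]) simp
  have H2: "pos_hyp X' (max M M')" by (rule pos_hyp_mono[OF H']) simp
  show ?thesis unfolding psqrt_eq[OF H1] psqrt_eq[OF H2] by (rule sqM_comm[OF H1 H2 K comm])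
qed

lemma pos_hyp_adj:
  fixes B :: "'a::chilbert_space \<Rightarrow> 'a"
  assumes B: "bounded_clinear B"
  shows "\<exists>M. pos_hyp (adj B \<circ> B) M"
proof -
  obtain K where K: "\<And>x. norm (adj B x) \<le> norm x * K" "K > 0"
    using bounded_linear.pos_bounded[OF bounded_clinear_linear[OF adj_bounded_clinear[OF B]]] by blast
  have q: "cinner v ((adj B \<circ> B) v) = complex_of_real ((norm (B v))\<^sup>2)" for v
    by (simp add: adj_char2[OF B] cinner_self)
  have "pos_hyp (adj B \<circ> B) (K\<^sup>2)"
    unfolding pos_hyp_def
  proof (intro conjI allI)
    show "bounded_clinear (adj B \<circ> B)" by (rule bounded_clinear_comp[OF adj_bounded_clinear[OF B] B])
    show "selfadj (adj B \<circ> B)" by (rule selfadj_adj_comp[OF B])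
    show "0 \<le> Re (cinner v ((adj B \<circ> B) v))" for v unfolding q by simp
    show "0 < K\<^sup>2" using K(2) by simp
    show "(norm ((adj B \<circ> B) v))\<^sup>2 \<le> K\<^sup>2 * Re (cinner v ((adj B \<circ> B) v))" for v
    proof -
      have "norm ((adj B \<circ> B) v) \<le> norm (B v) * K" using K(1)[of "B v"] by simp
      then have "(norm ((adj B \<circ> B) v))\<^sup>2 \<le> (norm (B v) * K)\<^sup>2" by (rule power_mono) simp
      then show ?thesis unfolding q by (simp add: power_mult_distrib mult.commute)
    qed
  qed
  then show ?thesis by blast
qed

lemma op_abs_psqrt: "op_abs T = psqrt (adj T \<circ> T)"
  unfolding op_abs_def psqrt_def ..

lemma op_abs_hyp:
  fixes T :: "'a::chilbert_space \<Rightarrow> 'a"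
  assumes T: "bounded_clinear T"
  shows "positive_op (op_abs T)" "op_abs T (op_abs T v) = adj T (T v)"
proof -
  obtain M where H: "pos_hyp (adj T \<circ> T) M" using pos_hyp_adj[OF T] by blast
  show "positive_op (op_abs T)" unfolding op_abs_psqrt by (rule psqrt_positive[OF H])
  show "op_abs T (op_abs T v) = adj T (T v)" unfolding op_abs_psqrt using psqrt_square[OF H] by simp
qed

lemma abs_intertwine:
  fixes T :: "'a::chilbert_space \<Rightarrow> 'a"
  assumes T: "bounded_clinear T"
  shows "T (op_abs T v) = op_abs (adj T) (T v)"
proof -
  have T': "bounded_clinear (adj T)" by (rule adj_bounded_clinear[OF T])
  obtain M where H: "pos_hyp (adj T \<circ> T) M" using pos_hyp_adj[OF T] by blast
  obtain M' where H': "pos_hyp (adj (adj T) \<circ> adj T) M'" using pos_hyp_adj[OF T'] by blast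
  show ?thesis unfolding op_abs_psqrt
    by (rule psqrt_comm[OF H H' T]) (simp add: adj_adj[OF T])
qed

lemma positive_bcl: "positive_op A \<Longrightarrow> bounded_clinear A"
  unfolding positive_op_def by blast

lemma shift_bcl: "bounded_clinear A \<Longrightarrow> bounded_clinear (\<lambda>y. A y - c *\<^sub>R y)"
  by (intro bounded_clinear_diff bounded_clinear_scaleR bounded_clinear_id)

lemma shift_selfadj: "selfadj A \<Longrightarrow> selfadj (\<lambda>y. A y - c *\<^sub>R y)"
  unfolding selfadj_def by (simp add: cinner_diff_left cinner_diff_right cinner_scaleR_left cinner_scaleR_right)

lemma op_abs_selfadj_hyp:
  fixes B :: "'a::chilbert_space \<Rightarrow> 'a"
  assumes B: "bounded_clinear B" and sa: "selfadj B"
  shows "\<exists>M. pos_hyp (\<lambda>v. B (B v)) M" "op_abs B = psqrt (\<lambda>v. B (B v))"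
proof -
  have e: "adj B \<circ> B = (\<lambda>v. B (B v))" using adj_selfadj[OF sa] by (simp add: o_def)
  show "\<exists>M. pos_hyp (\<lambda>v. B (B v)) M" using pos_hyp_adj[OF B] unfolding e .
  show "op_abs B = psqrt (\<lambda>v. B (B v))" unfolding op_abs_psqrt e ..
qed

lemma pos_part_bcl:
  fixes A :: "'a::chilbert_space \<Rightarrow> 'a"
  assumes A: "positive_op A"
  shows "bounded_clinear (pos_part (\<lambda>y. A y - c *\<^sub>R y))"
proof -
  let ?B = "\<lambda>y. A y - c *\<^sub>R y"
  have B: "bounded_clinear ?B" by (rule shift_bcl[OF positive_bcl[OF A]])
  obtain M where H: "pos_hyp (adj ?B \<circ> ?B) M" using pos_hyp_adj[OF B] by blast
  have P: "bounded_clinear (op_abs ?B)" unfolding op_abs_psqrt by (rule positive_bcl[OF psqrt_positive[OF H]])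
  show ?thesis unfolding pos_part_def
    by (intro bounded_clinear_scaleR bounded_clinear_add P B)
qed

lemma pos_part_intertwine:
  fixes T A A' :: "'a::chilbert_space \<Rightarrow> 'a"
  assumes T: "bounded_clinear T" and A: "positive_op A" and A': "positive_op A'"
    and comm: "\<And>v. T (A v) = A' (T v)"
  shows "T (pos_part (\<lambda>y. A y - c *\<^sub>R y) v) = pos_part (\<lambda>y. A' y - c *\<^sub>R y) (T v)"
proof -
  define B where "B = (\<lambda>y. A y - c *\<^sub>R y)"
  define B' where "B' = (\<lambda>y. A' y - c *\<^sub>R y)"
  have Tl: "bounded_linear T" by (rule bounded_clinear_linear[OF T])
  have Bc: "bounded_clinear B" unfolding B_def by (rule shift_bcl[OF positive_bcl[OF A]])
  have Bc': "bounded_clinear B'" unfolding B'_def by (rule shift_bcl[OF positive_bcl[OF A']])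
  have sB: "selfadj B" unfolding B_def by (rule shift_selfadj[OF positive_selfadj[OF A]])
  have sB': "selfadj B'" unfolding B'_def by (rule shift_selfadj[OF positive_selfadj[OF A']])
  define X where "X = (\<lambda>v. B (B v))"
  define X' where "X' = (\<lambda>v. B' (B' v))"
  obtain M where H: "pos_hyp X M" unfolding X_def using op_abs_selfadj_hyp(1)[OF Bc sB] by blast
  obtain M' where H': "pos_hyp X' M'" unfolding X'_def using op_abs_selfadj_hyp(1)[OF Bc' sB'] by blast
  have cB: "T (B v) = B' (T v)" for v unfolding B_def B'_def using linear_simps(2,5)[OF Tl] comm by simp
  have cBB: "T (X v) = X' (T v)" for v unfolding X_def X'_def using cB by simp
  have cabs: "T (op_abs B v) = op_abs B' (T v)" for v
  proof -
    have "T (psqrt X v) = psqrt X' (T v)" by (rule psqrt_comm[OF H H' T cBB])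
    then show ?thesis unfolding op_abs_selfadj_hyp(2)[OF Bc sB] op_abs_selfadj_hyp(2)[OF Bc' sB'] X_def X'_def .
  qed
  show ?thesis unfolding pos_part_def B_def[symmetric] B'_def[symmetric]
    using linear_simps(1,5)[OF Tl] cabs cB by simp
qed

lemma ker_in_N:
  fixes T :: "'a::chilbert_space \<Rightarrow> 'a"
  assumes T: "bounded_clinear T" and c: "c > 0" and Tx: "T x = 0"
  shows "pos_part (\<lambda>y. op_abs T y - c *\<^sub>R y) x = 0"
proof -
  let ?A = "op_abs T"
  let ?B = "\<lambda>y. ?A y - c *\<^sub>R y"
  have A: "positive_op ?A" by (rule op_abs_hyp(1)[OF T])
  have AA: "?A (?A x) = 0" using op_abs_hyp(2)[OF T, of x] Tx
    using linear_simps(3)[OF bounded_clinear_linear[OF adj_bounded_clinear[OF T]]] by simp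
  have saA: "cinner (?A u) w = cinner u (?A w)" for u w using positive_selfadj[OF A] unfolding selfadj_def by blast
  have "cinner (?A x) (?A x) = cinner x (?A (?A x))" by (rule saA)
  then have "cinner (?A x) (?A x) = 0" using AA by simp
  then have Ax: "?A x = 0" by (simp only: cinner_eq_zero_iff)
  have Bx: "?B x = - (c *\<^sub>R x)" using Ax by simp
  have B: "bounded_clinear ?B" by (rule shift_bcl[OF positive_bcl[OF A]])
  have sB: "selfadj ?B" by (rule shift_selfadj[OF positive_selfadj[OF A]])
  obtain M where H: "pos_hyp (\<lambda>v. ?B (?B v)) M" using op_abs_selfadj_hyp(1)[OF B sB] by blast
  let ?P = "op_abs ?B"
  have Pe: "?P = psqrt (\<lambda>v. ?B (?B v))" by (rule op_abs_selfadj_hyp(2)[OF B sB])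
  have P: "positive_op ?P" unfolding Pe by (rule psqrt_positive[OF H])
  have PP: "?P (?P v) = ?B (?B v)" for v unfolding Pe by (rule psqrt_square[OF H])
  have Pl: "bounded_linear ?P" by (rule bounded_clinear_linear[OF positive_bcl[OF P]])
  have BBx: "?B (?B x) = (c * c) *\<^sub>R x"
  proof -
    have Al: "bounded_linear ?A" by (rule bounded_clinear_linear[OF positive_bcl[OF A]])
    have "?A (- (c *\<^sub>R x)) = - (c *\<^sub>R ?A x)" using linear_simps(4,5)[OF Al] by simp
    then show ?thesis using Bx Ax by simp
  qed
  define z where "z = ?P x - c *\<^sub>R x"
  have Pz: "?P z + c *\<^sub>R z = 0"
  proof -
    have "?P z = ?P (?P x) - c *\<^sub>R ?P x" unfolding z_def
      by (simp only: linear_diff[OF bounded_linear.linear[OF Pl]] linear_scale[OF bounded_linear.linear[OF Pl]])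
    then show ?thesis unfolding z_def using PP[of x] BBx by (simp add: algebra_simps)
  qed
  then have "?P z = - (c *\<^sub>R z)" by (simp add: add_eq_0_iff2)
  then have "cinner z (?P z) = - (complex_of_real c * complex_of_real ((norm z)\<^sup>2))"
    by (simp add: cinner_minus_right cinner_scaleR_right cinner_self)
  then have "Re (cinner z (?P z)) = - (c * (norm z)\<^sup>2)" by simp
  moreover have "0 \<le> Re (cinner z (?P z))" using P unfolding positive_op_def by blast
  ultimately have "c * (norm z)\<^sup>2 \<le> 0" by simp
  then have "(norm z)\<^sup>2 \<le> 0" using c by (simp add: mult_le_0_iff)
  then have "z = 0" by simp
  then have "?P x = c *\<^sub>R x" unfolding z_def by simp
  then show ?thesis unfolding pos_part_def using Bx by simp
qed

definition Nset :: "('a::chilbert_space \<Rightarrow> 'a) \<Rightarrow> real \<Rightarrow> 'a set" where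
  "Nset T c = {x. pos_part (\<lambda>y. op_abs T y - c *\<^sub>R y) x = 0}"

lemma kernel_closed_csub:
  fixes Q :: "'a::chilbert_space \<Rightarrow> 'a"
  assumes Q: "bounded_clinear Q"
  shows "closed {x. Q x = 0}" "csub {x. Q x = 0}"
proof -
  have Ql: "bounded_linear Q" by (rule bounded_clinear_linear[OF Q])
  show "closed {x. Q x = 0}"
    using closed_Collect_eq[of Q "\<lambda>_. 0"] linear_continuous_on[OF Ql] by (simp add: continuous_on_const)
  show "csub {x. Q x = 0}" unfolding csub_def
    using linear_simps(1,3)[OF Ql] bounded_clinear_scaleC[OF Q] by simp
qed

lemma Nset_cc:
  fixes T :: "'a::chilbert_space \<Rightarrow> 'a"
  assumes T: "bounded_clinear T"
  shows "closed (Nset T c)" "csub (Nset T c)"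
  unfolding Nset_def using kernel_closed_csub[OF pos_part_bcl[OF op_abs_hyp(1)[OF T]]] by auto

lemma Nset_map:
  fixes T :: "'a::chilbert_space \<Rightarrow> 'a"
  assumes T: "bounded_clinear T"
  shows "T ` Nset T c \<subseteq> Nset (adj T) c"
proof
  fix y assume "y \<in> T ` Nset T c"
  then obtain x where x: "x \<in> Nset T c" and y: "y = T x" by blast
  have "T (pos_part (\<lambda>y. op_abs T y - c *\<^sub>R y) x) = pos_part (\<lambda>y. op_abs (adj T) y - c *\<^sub>R y) (T x)"
    by (rule pos_part_intertwine[OF T op_abs_hyp(1)[OF T] op_abs_hyp(1)[OF adj_bounded_clinear[OF T]]
          abs_intertwine[OF T]])
  then show "y \<in> Nset (adj T) c" using x y unfolding Nset_def
    using linear_simps(3)[OF bounded_clinear_linear[OF T]] by simp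
qed

lemma Nset_ker:
  fixes T :: "'a::chilbert_space \<Rightarrow> 'a"
  assumes T: "bounded_clinear T" and c: "c > 0" and "T x = 0"
  shows "x \<in> Nset T c"
  unfolding Nset_def using ker_in_N[OF T c assms(3)] by simp

lemma csub_image:
  assumes T: "bounded_clinear T" and S: "csub S"
  shows "csub (T ` S)"
proof -
  have Tl: "bounded_linear T" by (rule bounded_clinear_linear[OF T])
  have "0 \<in> T ` S" using csub_0[OF S] linear_simps(3)[OF Tl] by (metis image_eqI)
  moreover have "T x + T y \<in> T ` S" if "x \<in> S" "y \<in> S" for x y
    using linear_simps(1)[OF Tl, of x y] csub_add[OF S that] by (metis image_eqI)
  moreover have "a *\<^sub>C T x \<in> T ` S" if "x \<in> S" for a x
    using bounded_clinear_scaleC[OF T, of a x] csub_scaleC[OF S that] by (metis image_eqI)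
  ultimately show ?thesis unfolding csub_def by blast
qed

lemma range_closure:
  fixes T :: "'a::chilbert_space \<Rightarrow> 'a" and N N' :: "'a set"
  assumes T: "bounded_clinear T" and cN: "closed N" "csub N" and cN': "closed N'" "csub N'"
    and TN: "T ` N \<subseteq> N'" and TN': "adj T ` N' \<subseteq> N" and ker: "\<And>r. adj T r = 0 \<Longrightarrow> r \<in> N'"
  shows "closure (T ` orth N) = orth N'"
proof
  have sub: "T ` orth N \<subseteq> orth N'"
  proof
    fix y assume "y \<in> T ` orth N"
    then obtain x where x: "x \<in> orth N" and y: "y = T x" by blast
    have "cinner n y = 0" if n: "n \<in> N'" for n
    proof -
      have "adj T n \<in> N" using TN' n by blast
      then have "cinner (adj T n) x = 0" using x unfolding orth_def by blast
      then show ?thesis unfolding y by (simp add: adj_char[OF T])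
    qed
    then show "y \<in> orth N'" unfolding orth_def by blast
  qed
  then show "closure (T ` orth N) \<subseteq> orth N'" using orth_closed by (rule closure_minimal)
  show "orth N' \<subseteq> closure (T ` orth N)"
  proof
    fix y assume y: "y \<in> orth N'"
    define C where "C = closure (T ` orth N)"
    have cC: "closed C" "csub C" unfolding C_def
      by (simp, intro csub_closure csub_image[OF T orth_csub])
    have CN': "C \<subseteq> orth N'" unfolding C_def using sub orth_closed by (rule closure_minimal)
    define r where "r = y - orth_proj C y"
    have rC: "r \<in> orth (T ` orth N)" unfolding r_def
      using orth_proj_residual_orth[OF cC] unfolding C_def orth_closure .
    have rN': "r \<in> orth N'" unfolding r_def
      using csub_diff[OF orth_csub y] orth_proj_in[OF cC] CN' by blast
    have a1: "adj T r \<in> N"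
    proof -
      have "cinner x (adj T r) = 0" if "x \<in> orth N" for x
      proof -
        have "cinner (T x) r = 0" using rC that unfolding orth_def by blast
        then show ?thesis by (simp add: adj_char2[OF T])
      qed
      then have "adj T r \<in> orth (orth N)" unfolding orth_def by blast
      then show ?thesis using orth_orth[OF cN] by simp
    qed
    have a2: "adj T r \<in> orth N"
    proof -
      have "cinner n (adj T r) = 0" if "n \<in> N" for n
      proof -
        have "T n \<in> N'" using TN that by blast
        then have "cinner (T n) r = 0" using rN' unfolding orth_def by blast
        then show ?thesis by (simp add: adj_char2[OF T])
      qed
      then show ?thesis unfolding orth_def by blast
    qed
    have "cinner (adj T r) (adj T r) = 0" using a1 a2 unfolding orth_def by blast
    then have "adj T r = 0" by (simp only: cinner_eq_zero_iff)
    then have "r \<in> N'" by (rule ker)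
    then have "cinner r r = 0" using rN' unfolding orth_def by blast
    then have "r = 0" by (simp only: cinner_eq_zero_iff)
    then have "y = orth_proj C y" unfolding r_def by simp
    then show "y \<in> closure (T ` orth N)" using orth_proj_in[OF cC] unfolding C_def by metis
  qed
qed

lemma range_orth_proj:
  fixes M :: "'a::chilbert_space set"
  assumes "closed M" "csub M"
  shows "range (orth_proj M) = M"
  using orth_proj_in[OF assms] orth_proj_fix[OF assms] by (metis image_subsetI rangeI subsetI subset_antisym)

theorem proposition3p2:
  fixes T E :: "'a::chilbert_space \<Rightarrow> 'a" and a c :: real
  assumes T: "bounded_clinear T"
    and a: "a > 0" and c: "c > 0"
    and E: "bounded_clinear E" and idem: "E \<circ> E = E"
    and TE: "onorm (T \<circ> E) \<le> a"
    and below: "\<forall>\<xi>\<in>range (\<lambda>x. x - E x). c * norm \<xi> \<le> norm (T (\<xi> - E \<xi>))"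
  defines "F \<equiv> (\<lambda>x. x - range_proj (\<lambda>y. T (y - E y)) x)"
  shows "onorm (adj T \<circ> F) \<le> a \<and>
         (\<forall>\<beta>\<in>range (\<lambda>x. x - F x). c * norm \<beta> \<le> norm (adj T (\<beta> - F \<beta>))) \<and>
         (E = spectral_proj_le (op_abs T) c \<longrightarrow>
           F = spectral_proj_le (op_abs (adj T)) c \<and>
           (\<lambda>x. x - E x) = range_proj (\<lambda>y. adj T (y - F y)))"
proof -
  have Tl: "bounded_linear T" by (rule bounded_clinear_linear[OF T])
  have El: "bounded_linear E" by (rule bounded_clinear_linear[OF E])
  have Pc: "bounded_clinear (\<lambda>y. y - E y)" by (intro bounded_clinear_diff bounded_clinear_id E)
  have TPc: "bounded_clinear (\<lambda>y. T (y - E y))"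
    using bounded_clinear_comp[OF T Pc] by (simp add: o_def)
  define R0 where "R0 = range (\<lambda>y. T (y - E y))"
  define C where "C = closure R0"
  have cC: "closed C" "csub C" unfolding C_def R0_def
    by (simp, intro csub_closure csub_range TPc)
  have Fx: "F x = x - orth_proj C x" for x unfolding F_def range_proj_def C_def R0_def ..
  have Forth: "F x = orth_proj (orth C) x" for x unfolding Fx by (rule orth_proj_orth_compl[OF cC, symmetric])
  have TEl: "bounded_linear (T \<circ> E)" by (rule bounded_linear_compose[OF Tl El, unfolded o_def[symmetric]])
  have TEb: "norm (T (E z)) \<le> a * norm z" for z
  proof -
    have "norm ((T \<circ> E) z) \<le> onorm (T \<circ> E) * norm z" by (rule onorm[OF TEl])
    also have "\<dots> \<le> a * norm z" by (rule mult_right_mono[OF TE]) simp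
    finally show ?thesis by simp
  qed
  have EP: "E (y - E y) = 0" for y
  proof -
    have "E (E y) = E y" using idem by (metis comp_apply)
    then show ?thesis using linear_simps(2)[OF El] by simp
  qed
  have part1: "onorm (adj T \<circ> F) \<le> a"
  proof (rule onorm_bound)
    show "0 \<le> a" using a by simp
    fix x
    define b where "b = F x"
    define z where "z = adj T b"
    have bC: "b \<in> orth R0" unfolding b_def Forth using orth_proj_in[OF orth_closed orth_csub, of C x]
      unfolding C_def orth_closure .
    have Pz: "cinner (y - E y) z = 0" for y
    proof -
      have "cinner (T (y - E y)) b = 0" using bC unfolding orth_def R0_def by blast
      then show ?thesis unfolding z_def by (simp add: adj_char2[OF T])
    qed
    have "cinner z z = cinner (E z) z + cinner (z - E z) z" by (simp add: cinner_diff_left)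
    also have "cinner (z - E z) z = 0" by (rule Pz)
    also have "cinner (E z) z = cinner (T (E z)) b" unfolding z_def by (simp add: adj_char2[OF T])
    finally have zz: "cinner z z = cinner (T (E z)) b" by simp
    have "(norm z)\<^sup>2 = Re (cinner z z)" by (simp add: Re_cinner_self)
    also have "\<dots> \<le> cmod (cinner (T (E z)) b)" unfolding zz by (rule complex_Re_le_cmod)
    also have "\<dots> \<le> norm (T (E z)) * norm b" by (rule cauchy_schwarz)
    also have "\<dots> \<le> (a * norm z) * norm b" by (rule mult_right_mono[OF TEb]) simp
    finally have zb: "norm z * norm z \<le> (a * norm b) * norm z" by (simp add: power2_eq_square algebra_simps)
    have "norm z \<le> a * norm b"
    proof (cases "z = 0")
      case True then show ?thesis using a by simp
    next
      case False
      then have "0 < norm z" by simp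
      with zb show ?thesis by (rule mult_right_le_imp_le)
    qed
    also have "norm b \<le> norm x" unfolding b_def Forth by (rule orth_proj_norm[OF orth_closed orth_csub])
    then have "a * norm b \<le> a * norm x" using a by simp
    finally show "norm ((adj T \<circ> F) x) \<le> a * norm x" unfolding z_def b_def by simp
  qed
  have Gcl: "closed {\<beta>. c * norm \<beta> \<le> norm (adj T \<beta>)}"
  proof (rule closed_Collect_le)
    show "continuous_on UNIV (\<lambda>\<beta>::'a. c * norm \<beta>)" by (intro continuous_intros)
    have "continuous_on UNIV (adj T)"
      by (rule linear_continuous_on[OF bounded_clinear_linear[OF adj_bounded_clinear[OF T]]])
    then show "continuous_on UNIV (\<lambda>\<beta>. norm (adj T \<beta>))" by (intro continuous_intros)
  qed
  have R0G: "R0 \<subseteq> {\<beta>. c * norm \<beta> \<le> norm (adj T \<beta>)}"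
  proof
    fix \<beta> assume "\<beta> \<in> R0"
    then obtain \<xi> where \<beta>: "\<beta> = T (\<xi> - E \<xi>)" unfolding R0_def by blast
    define p where "p = \<xi> - E \<xi>"
    have pE: "p - E p = p" unfolding p_def using EP[of \<xi>] by simp
    have "c * norm p \<le> norm (T (p - E p))" using below unfolding p_def by blast
    then have cp: "c * norm p \<le> norm \<beta>" using pE unfolding \<beta> p_def by simp
    have "(norm \<beta>)\<^sup>2 = Re (cinner \<beta> (T p))" unfolding \<beta> p_def by (simp add: Re_cinner_self)
    also have "cinner \<beta> (T p) = cinner (adj T \<beta>) p" by (simp add: adj_char[OF T])
    also have "Re (cinner (adj T \<beta>) p) \<le> cmod (cinner (adj T \<beta>) p)" by (rule complex_Re_le_cmod)
    also have "\<dots> \<le> norm (adj T \<beta>) * norm p" by (rule cauchy_schwarz)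
    finally have b2: "(norm \<beta>)\<^sup>2 \<le> norm (adj T \<beta>) * norm p" .
    have "c * norm \<beta> \<le> norm (adj T \<beta>)"
    proof (cases "\<beta> = 0")
      case True then show ?thesis by simp
    next
      case False
      then have nb: "0 < norm \<beta>" by simp
      have "c * (norm \<beta>)\<^sup>2 \<le> norm (adj T \<beta>) * (c * norm p)"
        using mult_left_mono[OF b2, of c] c by (simp add: algebra_simps)
      also have "\<dots> \<le> norm (adj T \<beta>) * norm \<beta>" by (rule mult_left_mono[OF cp]) simp
      finally have "(c * norm \<beta>) * norm \<beta> \<le> norm (adj T \<beta>) * norm \<beta>"
        by (simp add: power2_eq_square algebra_simps)
      then show ?thesis using nb by (rule mult_right_le_imp_le)
    qed
    then show "\<beta> \<in> {\<beta>. c * norm \<beta> \<le> norm (adj T \<beta>)}" by simp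
  qed
  have CG: "C \<subseteq> {\<beta>. c * norm \<beta> \<le> norm (adj T \<beta>)}" unfolding C_def
    using R0G Gcl by (rule closure_minimal)
  have part2: "\<forall>\<beta>\<in>range (\<lambda>x. x - F x). c * norm \<beta> \<le> norm (adj T (\<beta> - F \<beta>))"
  proof
    fix \<beta> assume "\<beta> \<in> range (\<lambda>x. x - F x)"
    then obtain x where \<beta>: "\<beta> = x - F x" by blast
    have \<beta>C: "\<beta> \<in> C" unfolding \<beta> Fx using orth_proj_in[OF cC] by simp
    have "F \<beta> = 0" unfolding Fx using orth_proj_fix[OF cC \<beta>C] by simp
    then show "c * norm \<beta> \<le> norm (adj T (\<beta> - F \<beta>))" using CG \<beta>C by auto
  qed
  have part3: "F = spectral_proj_le (op_abs (adj T)) c \<and>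
           (\<lambda>x. x - E x) = range_proj (\<lambda>y. adj T (y - F y))"
    if EN: "E = spectral_proj_le (op_abs T) c"
  proof -
    have T': "bounded_clinear (adj T)" by (rule adj_bounded_clinear[OF T])
    define N where "N = Nset T c"
    define N' where "N' = Nset (adj T) c"
    have cN: "closed N" "csub N" unfolding N_def by (rule Nset_cc[OF T])+
    have cN': "closed N'" "csub N'" unfolding N'_def by (rule Nset_cc[OF T'])+
    have EN': "E = orth_proj N" unfolding EN spectral_proj_le_def N_def Nset_def ..
    have NN: "Nset (adj (adj T)) c = N" unfolding N_def adj_adj[OF T] ..
    have TN: "T ` N \<subseteq> N'" unfolding N_def N'_def by (rule Nset_map[OF T])
    have TN': "adj T ` N' \<subseteq> N" using Nset_map[OF T', of c] unfolding N'_def NN .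
    have kerT': "r \<in> N'" if "adj T r = 0" for r unfolding N'_def by (rule Nset_ker[OF T' c that])
    have kerT: "r \<in> N" if "adj (adj T) r = 0" for r
      using Nset_ker[OF T c] that unfolding adj_adj[OF T] N_def by blast
    have TTN: "adj (adj T) ` N \<subseteq> N'" using TN unfolding adj_adj[OF T] .
    have PE: "(\<lambda>y. y - E y) = orth_proj (orth N)"
      unfolding EN' by (rule ext) (rule orth_proj_orth_compl[OF cN, symmetric])
    have R0e: "R0 = T ` orth N"
    proof -
      have "R0 = range (\<lambda>y. T (orth_proj (orth N) y))" unfolding R0_def using fun_cong[OF PE] by simp
      also have "\<dots> = T ` range (orth_proj (orth N))" by (rule range_composition)
      finally show ?thesis using range_orth_proj[OF orth_closed orth_csub, of N] by simp
    qed
    have Ce: "C = orth N'" unfolding C_def R0e by (rule range_closure[OF T cN cN' TN TN' kerT'])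
    have Fe: "F = orth_proj N'"
    proof (rule ext)
      fix x
      have "F x = x - orth_proj (orth N') x" unfolding Fx Ce ..
      also have "\<dots> = orth_proj (orth (orth N')) x"
        by (rule orth_proj_orth_compl[OF orth_closed orth_csub, symmetric])
      also have "orth (orth N') = N'" by (rule orth_orth[OF cN'])
      finally show "F x = orth_proj N' x" .
    qed
    have F1: "F = spectral_proj_le (op_abs (adj T)) c" unfolding Fe N'_def Nset_def spectral_proj_le_def ..
    have PF: "(\<lambda>y. y - F y) = orth_proj (orth N')"
      unfolding Fe by (rule ext) (rule orth_proj_orth_compl[OF cN', symmetric])
    have "range (\<lambda>y. adj T (y - F y)) = adj T ` orth N'"
    proof -
      have "range (\<lambda>y. adj T (y - F y)) = range (\<lambda>y. adj T (orth_proj (orth N') y))"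
        using fun_cong[OF PF] by simp
      also have "\<dots> = adj T ` range (orth_proj (orth N'))" by (rule range_composition)
      finally show ?thesis using range_orth_proj[OF orth_closed orth_csub, of N'] by simp
    qed
    then have "closure (range (\<lambda>y. adj T (y - F y))) = orth N"
      using range_closure[OF T' cN' cN TN' TTN kerT] by simp
    then have "range_proj (\<lambda>y. adj T (y - F y)) = orth_proj (orth N)" unfolding range_proj_def by simp
    also have "\<dots> = (\<lambda>x. x - E x)" unfolding PE ..
    finally show ?thesis using F1 by simp
  qed
  show ?thesis using part1 part2 part3 by blast
qed

end
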